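(* Let $n\ge2$, $v\in\tilde{S}_n$ and $r\in\mathbb{Z}$. Let $R(\Psi^+_r(v))$ denote the set of all reduced words of all elements of $\Psi^+_r(v)$ and $R(\Psi^-_r(v))$ the set of all reduced words of all elements of $\Psi^-_r(v)$, each reduced word $a$ of an element $w\gtrdot v$ being regarded as the reduced $v$-marked word $(a,i)$ with $i$ the unique index such that deleting $a_i$ gives a reduced word of $v$. Then the map $\phi^v$ restricts to a bijection $\phi^v_r: R(\Psi^+_r(v))\to R(\Psi^-_r(v))$.
   Context: $\tilde{S}_n$ is the affine symmetric group: bijections $w:\mathbb{Z}\to\mathbb{Z}$ with $w(i+n)=w(i)+n$ and $\sum_{i=1}^n w(i)=\sum_{i=1}^n i$, a Coxeter group with simple reflections $s_0,\dots,s_{n-1}$ ($s_i$ swaps $i+kn$ and $i+1+kn$ for all $k$). For $r\not\equiv s\pmod n$, $t_{r,s}$ is the unique element swapping $r$ and $s$ and fixing every integer not congruent to $r$ or $s$ mod $n$. $\ell$ is Coxeter length, $R(w)$ the set of reduced words of $w$ (words in letters $\{0,\dots,n-1\}$). $v\lessdot w$ means $w=vt_{p,q}$ for some reflection $t_{p,q}$ and $\ell(w)=\ell(v)+1$. $\Psi^+_r(v)$ is the set of $w$ with $v\lessdot w$ and $w=vt_{r,s}$ for some $s>r$; $\Psi^-_r(v)$ is the set of $w$ with $v\lessdot w$ and $w=vt_{s,r}$ for some $s<r$. (For $w\gtrdot v$ and $a\in R(w)$ there is a unique index $i$ such that deleting $a_i$ gives a word in $R(v)$.) A $v$-marked word is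 a pair $(a,i)$ with $a=a_1\cdots a_l$ a word in letters $\{0,\dots,n-1\}$ and $i\in[1,l]$ such that $a_1\cdots\widehat{a_i}\cdots a_l\in R(v)$; it is reduced if $a$ is a reduced word. The affine Little graph has the $v$-marked words as vertices and, from each $(a,i)$, a unique edge $(a,i)\to(a',j)$, where $a'$ is obtained from $a$ by replacing $a_i$ by $a_i-1$ (mod $n$), and $j=i$ if $a'$ is reduced, while otherwise $j$ is the unique index $j\ne i$ with $a'_1\cdots\widehat{a'_j}\cdots a'_l\in R(v)$ (which exists and is unique). Every vertex has exactly one incoming edge, so the components are finite directed cycles. For a reduced $v$-marked word $(a,i)$, $\phi^v(a,i)$ is the first reduced $v$-marked word strictly after $(a,i)$ along its cycle. *)

theory Defs
  imports Main
begin

text \<open>Elements of the affine symmetric group are functions int => int; the group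
product is composition: (v w)(i) = v (w i), so v t_{p,q} = v o t_{p,q}.\<close>

definition affine_perm :: "nat \<Rightarrow> (int \<Rightarrow> int) \<Rightarrow> bool" where
  "affine_perm n w \<longleftrightarrow> bij w \<and> (\<forall>i. w (i + int n) = w i + int n)
     \<and> (\<Sum>i\<in>{1..int n}. w i) = (\<Sum>i\<in>{1..int n}. i)"

definition sref :: "nat \<Rightarrow> nat \<Rightarrow> int \<Rightarrow> int" where
  "sref n i j = (if j mod int n = int i mod int n then j + 1
                 else if j mod int n = (int i + 1) mod int n then j - 1 else j)"

definition word_perm :: "nat \<Rightarrow> nat list \<Rightarrow> int \<Rightarrow> int" where
  "word_perm n a = foldr (\<lambda>i f. sref n i \<circ> f) a id"

definition is_word :: "nat \<Rightarrow> nat list \<Rightarrow> bool" where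
  "is_word n a \<longleftrightarrow> (\<forall>x\<in>set a. x < n)"

definition clen :: "nat \<Rightarrow> (int \<Rightarrow> int) \<Rightarrow> nat" where
  "clen n w = (LEAST k. \<exists>a. is_word n a \<and> length a = k \<and> word_perm n a = w)"

definition red_words :: "nat \<Rightarrow> (int \<Rightarrow> int) \<Rightarrow> nat list set" where
  "red_words n w = {a. is_word n a \<and> word_perm n a = w \<and> length a = clen n w}"

definition is_reduced :: "nat \<Rightarrow> nat list \<Rightarrow> bool" where
  "is_reduced n a \<longleftrightarrow> a \<in> red_words n (word_perm n a)"

definition tref :: "nat \<Rightarrow> int \<Rightarrow> int \<Rightarrow> int \<Rightarrow> int" where
  "tref n r s j = (if j mod int n = r mod int n then j + (s - r)
                   else if j mod int n = s mod int n then j + (r - s) else j)"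

definition covers :: "nat \<Rightarrow> (int \<Rightarrow> int) \<Rightarrow> (int \<Rightarrow> int) \<Rightarrow> bool" where
  "covers n v w \<longleftrightarrow> (\<exists>p q. p mod int n \<noteq> q mod int n \<and> w = v \<circ> tref n p q)
      \<and> clen n w = clen n v + 1"

definition Psi_plus :: "nat \<Rightarrow> int \<Rightarrow> (int \<Rightarrow> int) \<Rightarrow> (int \<Rightarrow> int) set" where
  "Psi_plus n r v = {w. covers n v w \<and>
      (\<exists>s. s > r \<and> s mod int n \<noteq> r mod int n \<and> w = v \<circ> tref n r s)}"

definition Psi_minus :: "nat \<Rightarrow> int \<Rightarrow> (int \<Rightarrow> int) \<Rightarrow> (int \<Rightarrow> int) set" where
  "Psi_minus n r v = {w. covers n v w \<and>
      (\<exists>s. s < r \<and> s mod int n \<noteq> r mod int n \<and> w = v \<circ> tref n s r)}"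

definition del_at :: "nat \<Rightarrow> 'a list \<Rightarrow> 'a list" where
  "del_at i a = take i a @ drop (Suc i) a"

text \<open>v-marked words (a,i), with i a 0-based index (paper's index i+1).\<close>
definition marked :: "nat \<Rightarrow> (int \<Rightarrow> int) \<Rightarrow> nat list \<times> nat \<Rightarrow> bool" where
  "marked n v ai \<longleftrightarrow> (case ai of (a, i) \<Rightarrow>
      is_word n a \<and> i < length a \<and> del_at i a \<in> red_words n v)"

definition little_next :: "nat \<Rightarrow> (int \<Rightarrow> int) \<Rightarrow> nat list \<times> nat \<Rightarrow> nat list \<times> nat" where
  "little_next n v ai = (case ai of (a, i) \<Rightarrow>
      let a' = a[i := (a ! i + n - 1) mod n] in
      if is_reduced n a' then (a', i)
      else (a', THE j. j < length a' \<and> j \<noteq> i \<and> del_at j a' \<in> red_words n v))"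

definition phi :: "nat \<Rightarrow> (int \<Rightarrow> int) \<Rightarrow> nat list \<times> nat \<Rightarrow> nat list \<times> nat" where
  "phi n v ai = (little_next n v ^^
      (LEAST k. k > 0 \<and> is_reduced n (fst ((little_next n v ^^ k) ai)))) ai"

definition marked_red_words :: "nat \<Rightarrow> (int \<Rightarrow> int) \<Rightarrow> (int \<Rightarrow> int) set \<Rightarrow> (nat list \<times> nat) set" where
  "marked_red_words n v S = {(a, i). (\<exists>w\<in>S. a \<in> red_words n w) \<and> i < length a
      \<and> del_at i a \<in> red_words n v}"

end

theory Submission
  imports Defs
begin

locale aff = fixes n :: nat assumes n2: "n \<ge> 2"
begin

lemma npos: "int n > 0" using n2 by simp

lemma mod_ex: assumes "(a::int) mod int n = b mod int n" shows "b = a + ((b - a) div int n) * int n"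
proof -
  have "int n dvd (b - a)" using assms[symmetric] by (simp add: mod_eq_dvd_iff)
  then show ?thesis by simp
qed

definition per :: "(int \<Rightarrow> int) \<Rightarrow> bool" where
  "per w \<longleftrightarrow> bij w \<and> (\<forall>i. w (i + int n) = w i + int n)"

lemma per_shift:
  assumes "per w" shows "w (i + m * int n) = w i + m * int n"
proof -
  have P: "\<And>i. w (i + int n) = w i + int n" using assms per_def by auto
  have up: "\<And>k::nat. \<forall>i. w (i + int k * int n) = w i + int k * int n"
  proof -
    fix k :: nat show "\<forall>i. w (i + int k * int n) = w i + int k * int n"
    proof (induction k)
      case 0 then show ?case by simp
    next
      case (Suc k)
      show ?case
      proof
        fix i
        have "w (i + int (Suc k) * int n) = w ((i + int k * int n) + int n)" by (simp add: algebra_simps)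
        also have "\<dots> = w i + int k * int n + int n" using P Suc by simp
        finally show "w (i + int (Suc k) * int n) = w i + int (Suc k) * int n" by (simp add: algebra_simps)
      qed
    qed
  qed
  show ?thesis
  proof (cases "m \<ge> 0")
    case True then obtain k where "m = int k" using nonneg_int_cases by blast
    then show ?thesis using up by simp
  next
    case False then obtain k where k: "m = - int k" by (metis int_cases4 not_le of_nat_0_le_iff)
    have "w i = w ((i + m * int n) + int k * int n)" using k by simp
    also have "\<dots> = w (i + m * int n) + int k * int n" using up by blast
    finally show ?thesis using k by simp
  qed
qed

lemma per_cong:
  assumes "per w" shows "(w i mod int n = w j mod int n) \<longleftrightarrow> (i mod int n = j mod int n)"
proof
  assume h: "w i mod int n = w j mod int n"
  define m where "m = (w j - w i) div int n"
  have "w j = w i + m * int n" using mod_ex[OF h] unfolding m_def .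
  also have "\<dots> = w (i + m * int n)" using per_shift[OF assms] by simp
  finally have "j = i + m * int n" using assms unfolding per_def bij_def inj_def by metis
  then show "i mod int n = j mod int n" by simp
next
  assume h: "i mod int n = j mod int n"
  define m where "m = (j - i) div int n"
  have "j = i + m * int n" using mod_ex[OF h] unfolding m_def .
  then have "w j = w i + m * int n" using per_shift[OF assms] by simp
  then show "w i mod int n = w j mod int n" by simp
qed

lemma per_inv: assumes "per w" shows "per (inv w)"
proof -
  have b: "bij w" using assms per_def by auto
  have "inv w (i + int n) = inv w i + int n" for i
  proof -
    have "w (inv w i + int n) = i + int n" using assms b unfolding per_def
      by (simp add: bij_is_surj surj_f_inv_f)
    then show ?thesis using b by (metis bij_is_inj inv_f_f)
  qed
  then show ?thesis using b bij_imp_bij_inv per_def by auto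
qed

lemma per_comp: assumes "per f" "per g" shows "per (f \<circ> g)"
  using assms unfolding per_def by (auto intro: bij_comp)

lemma per_id: "per id" unfolding per_def by (simp add: bij_id)

lemma per_inv_f: "per w \<Longrightarrow> inv w (w x) = x"
  unfolding per_def by (simp add: bij_is_inj)
lemma per_f_inv: "per w \<Longrightarrow> w (inv w x) = x"
  unfolding per_def by (simp add: bij_is_surj surj_f_inv_f)
lemma per_inj: "per w \<Longrightarrow> w x = w y \<longleftrightarrow> x = y"
  unfolding per_def bij_def inj_def by metis

definition ncong :: "int \<Rightarrow> int \<Rightarrow> bool" where
  "ncong p q \<longleftrightarrow> p mod int n \<noteq> q mod int n"

lemma tref_p: "ncong p q \<Longrightarrow> tref n p q p = q"
  unfolding tref_def ncong_def by simp
lemma tref_q: "ncong p q \<Longrightarrow> tref n p q q = p"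
  unfolding tref_def ncong_def by simp
lemma tref_sym: "ncong p q \<Longrightarrow> tref n p q = tref n q p"
  unfolding tref_def ncong_def by (rule ext) auto
lemma tref_shift: "tref n (p + m * int n) (q + m * int n) = tref n p q"
  unfolding tref_def by (rule ext) simp
lemma tref_invol: "ncong p q \<Longrightarrow> tref n p q (tref n p q j) = j"
proof -
  assume a: "ncong p q"
  have [simp]: "(j + (q - p)) mod int n = q mod int n" if "j mod int n = p mod int n" for j
    using that by (metis add_diff_cancel_left' diff_add_cancel mod_add_left_eq)
  have [simp]: "(j + (p - q)) mod int n = p mod int n" if "j mod int n = q mod int n" for j
    using that by (metis add_diff_cancel_left' diff_add_cancel mod_add_left_eq)
  show ?thesis using a unfolding tref_def ncong_def by auto
qed
lemma tref_comp_self: "ncong p q \<Longrightarrow> tref n p q \<circ> tref n p q = id"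
  by (rule ext) (simp add: tref_invol)
lemma tref_per: assumes "ncong p q" shows "per (tref n p q)"
proof -
  have "bij (tref n p q)" by (rule o_bij[where g="tref n p q"]) (simp_all add: tref_comp_self assms)
  moreover have "tref n p q (i + int n) = tref n p q i + int n" for i
    unfolding tref_def by simp
  ultimately show ?thesis unfolding per_def by auto
qed
lemma tref_inv: "ncong p q \<Longrightarrow> inv (tref n p q) = tref n p q"
  by (metis inv_unique_comp tref_comp_self)

lemma ncong_shift: "ncong (p + m * int n) (q + m * int n) = ncong p q"
  unfolding ncong_def by simp

lemma sref_tref: "sref n k = tref n (int k) (int k + 1)"
  unfolding sref_def tref_def by (rule ext) auto

lemma ncong_succ: "ncong k (k+1)"
proof -
  have "k mod int n \<noteq> (k + 1) mod int n"
  proof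
    assume "k mod int n = (k + 1) mod int n"
    then have "int n dvd 1" by (metis add_diff_cancel_left' mod_eq_dvd_iff)
    then show False using n2 by simp
  qed
  then show ?thesis unfolding ncong_def by simp
qed

lemma per_ncong: "per w \<Longrightarrow> ncong (w p) (w q) \<longleftrightarrow> ncong p q"
  unfolding ncong_def using per_cong by simp

lemma tref_eq:
  assumes "ncong p q" "ncong c d" "tref n p q = tref n c d"
  shows "\<exists>m. (c = p + m * int n \<and> d = q + m * int n) \<or> (c = q + m * int n \<and> d = p + m * int n)"
proof -
  have e: "tref n p q c = d" using assms tref_p by metis
  show ?thesis
  proof (cases "c mod int n = p mod int n")
    case True
    have "c = p + ((c - p) div int n) * int n" using mod_ex[OF True[symmetric]] .
    moreover have "d = c + (q - p)" using e True unfolding tref_def by simp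
    ultimately show ?thesis by (metis add.commute add_diff_eq diff_add_cancel)
  next
    case F: False
    show ?thesis
    proof (cases "c mod int n = q mod int n")
      case True
      have "c = q + ((c - q) div int n) * int n" using mod_ex[OF True[symmetric]] .
      moreover have "d = c + (p - q)" using e True F unfolding tref_def by simp
      ultimately show ?thesis by (metis add.commute add_diff_eq diff_add_cancel)
    next
      case False
      then have "d = c" using e F unfolding tref_def by simp
      then show ?thesis using assms(2) unfolding ncong_def by simp
    qed
  qed
qed

lemma tref_pm: "ncong p q \<Longrightarrow> tref n p q (p + m * int n) = q + m * int n"
  unfolding tref_def ncong_def by simp
lemma tref_qm: "ncong p q \<Longrightarrow> tref n p q (q + m * int n) = p + m * int n"
  unfolding tref_def ncong_def by simp
lemma tref_other: "j mod int n \<noteq> p mod int n \<Longrightarrow> j mod int n \<noteq> q mod int n \<Longrightarrow> tref n p q j = j"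
  unfolding tref_def by simp

lemma tref_conj:
  assumes w: "per w" and pq: "ncong p q"
  shows "w \<circ> tref n p q \<circ> inv w = tref n (w p) (w q)"
proof
  fix y
  define j where "j = inv w y"
  have y: "y = w j" by (simp add: j_def per_f_inv[OF w])
  have nc: "ncong (w p) (w q)" using per_ncong w pq by auto
  have lhs: "(w \<circ> tref n p q \<circ> inv w) y = w (tref n p q j)" by (simp add: j_def)
  show "(w \<circ> tref n p q \<circ> inv w) y = tref n (w p) (w q) y"
  proof (cases "j mod int n = p mod int n")
    case True
    define m where "m = (j - p) div int n"
    have jm: "j = p + m * int n" using mod_ex[OF True[symmetric]] unfolding m_def .
    have ym: "y = w p + m * int n" using y jm per_shift[OF w] by simp
    have "w (tref n p q j) = w q + m * int n" using jm tref_pm[OF pq] per_shift[OF w] by simp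
    also have "\<dots> = tref n (w p) (w q) y" using ym tref_pm[OF nc] by simp
    finally show ?thesis using lhs by simp
  next
    case F1: False
    show ?thesis
    proof (cases "j mod int n = q mod int n")
      case True
      define m where "m = (j - q) div int n"
      have jm: "j = q + m * int n" using mod_ex[OF True[symmetric]] unfolding m_def .
      have ym: "y = w q + m * int n" using y jm per_shift[OF w] by simp
      have "w (tref n p q j) = w p + m * int n" using jm tref_qm[OF pq] per_shift[OF w] by simp
      also have "\<dots> = tref n (w p) (w q) y" using ym tref_qm[OF nc] by simp
      finally show ?thesis using lhs by simp
    next
      case False
      have "tref n p q j = j" using F1 False by (rule tref_other)
      moreover have "y mod int n \<noteq> w p mod int n" "y mod int n \<noteq> w q mod int n"
        using F1 False y per_cong[OF w] by auto
      ultimately show ?thesis using y lhs tref_other by simp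
    qed
  qed
qed


lemma ncong_irrefl: "ncong p q \<Longrightarrow> p \<noteq> q" unfolding ncong_def by auto

definition Nset :: "(int \<Rightarrow> int) \<Rightarrow> (int \<Rightarrow> int) set" where
  "Nset w = {tref n c d | c d. c < d \<and> w d < w c}"

definition L :: "(int \<Rightarrow> int) \<Rightarrow> nat" where
  "L w = card (Nset w)"

lemma inv_pair_ncong:
  assumes w: "per w" and cd: "c < d" "w d < w c" shows "ncong c d"
proof (rule ccontr)
  assume "\<not> ncong c d"
  then have h: "c mod int n = d mod int n" unfolding ncong_def by simp
  define m where "m = (d - c) div int n"
  have dm: "d = c + m * int n" using mod_ex[OF h] unfolding m_def .
  then have "m > 0" using cd npos by (smt (verit) mult_nonpos_nonneg)
  then have "w d > w c" using dm per_shift[OF w] npos by simp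
  then show False using cd by simp
qed

lemma Nset_refl: "per w \<Longrightarrow> t \<in> Nset w \<Longrightarrow> \<exists>p q. ncong p q \<and> t = tref n p q"
  unfolding Nset_def using inv_pair_ncong by blast

lemma Nset_iff:
  assumes w: "per w" and pq: "ncong p q"
  shows "tref n p q \<in> Nset w \<longleftrightarrow> (p < q \<longleftrightarrow> w q < w p)"
proof
  assume "tref n p q \<in> Nset w"
  then obtain c d where cd: "c < d" "w d < w c" "tref n p q = tref n c d" unfolding Nset_def by blast
  have ncd: "ncong c d" using inv_pair_ncong[OF w cd(1,2)] .
  obtain m where "(c = p + m * int n \<and> d = q + m * int n) \<or> (c = q + m * int n \<and> d = p + m * int n)"
    using tref_eq[OF pq ncd cd(3)] by blast
  then show "(p < q \<longleftrightarrow> w q < w p)"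
  proof
    assume h: "c = p + m * int n \<and> d = q + m * int n"
    then have "w c = w p + m * int n" "w d = w q + m * int n" using per_shift[OF w] by auto
    then show ?thesis using cd h by auto
  next
    assume h: "c = q + m * int n \<and> d = p + m * int n"
    then have "w c = w q + m * int n" "w d = w p + m * int n" using per_shift[OF w] by auto
    then show ?thesis using cd h by auto
  qed
next
  assume h: "(p < q \<longleftrightarrow> w q < w p)"
  have pq': "p \<noteq> q" using pq ncong_irrefl by auto
  have wpq: "w p \<noteq> w q" using pq' per_inj[OF w] by auto
  show "tref n p q \<in> Nset w"
  proof (cases "p < q")
    case True then show ?thesis using h unfolding Nset_def by blast
  next
    case False
    then have "q < p" "w p < w q" using h pq' wpq by auto
    then show ?thesis using tref_sym[OF pq] unfolding Nset_def by blast
  qed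
qed

lemma disp_periodic:
  assumes w: "per w" shows "w j - j = w ((j - 1) mod int n + 1) - ((j - 1) mod int n + 1)"
proof -
  define j0 where "j0 = (j - 1) mod int n + 1"
  define m where "m = (j - 1) div int n"
  have "j = j0 + m * int n" unfolding j0_def m_def by simp
  then have "w j = w j0 + m * int n" using per_shift[OF w] by simp
  then show ?thesis using \<open>j = j0 + m * int n\<close> unfolding j0_def by simp
qed

lemma disp_bound:
  assumes w: "per w" shows "\<exists>C. \<forall>j. \<bar>w j - j\<bar> \<le> C"
proof -
  define C where "C = Max ((\<lambda>j. \<bar>w j - j\<bar>) ` {1..int n})"
  have "\<bar>w j - j\<bar> \<le> C" for j
  proof -
    have "(j - 1) mod int n + 1 \<in> {1..int n}"
      using pos_mod_bound[OF npos, of "j-1"] pos_mod_sign[OF npos, of "j-1"] by simp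
    then have "\<bar>w ((j - 1) mod int n + 1) - ((j - 1) mod int n + 1)\<bar> \<le> C"
      unfolding C_def by (intro Max_ge) auto
    then show ?thesis using disp_periodic[OF w, of j] by simp
  qed
  then show ?thesis by blast
qed

lemma finite_Nset: assumes w: "per w" shows "finite (Nset w)"
proof -
  obtain C where C: "\<And>j. \<bar>w j - j\<bar> \<le> C" using disp_bound[OF w] by blast
  have "Nset w \<subseteq> (\<lambda>(c,d). tref n c d) ` ({1..int n} \<times> {1..int n + 2 * C})"
  proof
    fix t assume "t \<in> Nset w"
    then obtain c d where cd: "c < d" "w d < w c" "t = tref n c d" unfolding Nset_def by blast
    define m where "m = (c - 1) div int n"
    define c' where "c' = c - m * int n"
    define d' where "d' = d - m * int n"
    have c'r: "c' = (c - 1) mod int n + 1" unfolding c'_def m_def by (simp add: minus_div_mult_eq_mod[symmetric])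
    have c'1: "c' \<in> {1..int n}"
      using c'r pos_mod_bound[OF npos, of "c-1"] pos_mod_sign[OF npos, of "c-1"] by simp
    have "w c = w c' + m * int n" "w d = w d' + m * int n"
      using per_shift[OF w, of c' m] per_shift[OF w, of d' m] unfolding c'_def d'_def by auto
    then have "w d' < w c'" using cd by simp
    moreover have "c' < d'" using cd unfolding c'_def d'_def by simp
    ultimately have "d' \<le> int n + 2 * C" using C[of c'] C[of d'] c'1 by auto
    then have "(c', d') \<in> {1..int n} \<times> {1..int n + 2 * C}" using c'1 \<open>c' < d'\<close> by auto
    moreover have "t = tref n c' d'" using cd(3) tref_shift[of c' m d'] unfolding c'_def d'_def by simp
    ultimately show "t \<in> (\<lambda>(c,d). tref n c d) ` ({1..int n} \<times> {1..int n + 2 * C})" by force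
  qed
  then show ?thesis by (rule finite_subset) auto
qed


lemma cong_plus1: "y mod int n = x mod int n \<longleftrightarrow> (y+1) mod int n = (x+1) mod int n"
  by (simp add: mod_eq_dvd_iff)

lemma sx_val: "tref n x (x+1) u = (if u mod int n = x mod int n then u+1
   else if u mod int n = (x+1) mod int n then u - 1 else u)"
  by (simp add: tref_def)

lemma s_lt:
  assumes uv: "u < v"
  shows "tref n x (x+1) u < tref n x (x+1) v \<longleftrightarrow> \<not>(u mod int n = x mod int n \<and> v = u+1)"
proof -
  have nx: "x mod int n \<noteq> (x+1) mod int n" using ncong_succ unfolding ncong_def by simp
  let ?s = "tref n x (x+1)"
  show ?thesis
  proof (cases "u mod int n = x mod int n")
    case ux: True
    have su: "?s u = u + 1" using ux sx_val by simp
    show ?thesis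
    proof (cases "v = u + 1")
      case True
      have "v mod int n = (x+1) mod int n" using ux cong_plus1 True by simp
      then have "?s v = u" using nx True sx_val by simp
      then show ?thesis using su ux True by simp
    next
      case vne: False
      have "?s v > u + 1"
      proof (cases "v mod int n = x mod int n")
        case True then show ?thesis using sx_val uv vne by simp
      next
        case F: False
        show ?thesis
        proof (cases "v mod int n = (x+1) mod int n")
          case True
          have "(u+1) mod int n = (x+1) mod int n" using ux cong_plus1 by simp
          then have d1: "int n dvd (v - (x+1))" "int n dvd (u + 1 - (x+1))" using True by (simp_all add: mod_eq_dvd_iff)
          have "v - (u+1) = (v - (x+1)) - (u + 1 - (x+1))" by simp
          then have "int n dvd (v - (u+1))" using dvd_diff[OF d1] by (simp only:)
          moreover have "v - (u+1) > 0" using uv vne by simp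
          ultimately have "v - (u+1) \<ge> int n" by (simp add: zdvd_imp_le)
          then have "v \<ge> u + 3" using n2 by simp
          then show ?thesis using sx_val F True by simp
        next
          case False then show ?thesis using sx_val F uv vne by simp
        qed
      qed
      then show ?thesis using su vne by simp
    qed
  next
    case unx: False
    have "?s v \<ge> v - 1" using sx_val[of x v] by (auto split: if_splits)
    moreover have "?s u < ?s v"
    proof (cases "u mod int n = (x+1) mod int n")
      case True
      then have "?s u = u - 1" using unx sx_val by simp
      then show ?thesis using \<open>?s v \<ge> v - 1\<close> uv by simp
    next
      case F: False
      then have su: "?s u = u" using unx sx_val by simp
      show ?thesis
      proof (cases "v mod int n = x mod int n")
        case True then show ?thesis using su sx_val uv by simp
      next
        case F2: False
        show ?thesis
        proof (cases "v mod int n = (x+1) mod int n")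
          case True
          have "(v - 1) mod int n = x mod int n" using True cong_plus1[of "v-1" x] by simp
          then have "v - 1 \<noteq> u" using unx by auto
          then show ?thesis using su sx_val F2 True uv by simp
        next
          case False then show ?thesis using su sx_val F2 uv by simp
        qed
      qed
    qed
    then show ?thesis using unx by simp
  qed
qed

definition tau0 :: "(int \<Rightarrow> int) \<Rightarrow> int \<Rightarrow> (int \<Rightarrow> int)" where
  "tau0 w x = tref n (inv w x) (inv w (x+1))"

lemma tau0_ncong: "per w \<Longrightarrow> ncong (inv w x) (inv w (x+1))"
  using per_ncong[OF per_inv, of w x "x+1"] ncong_succ by simp

lemma tau0_conj: "per w \<Longrightarrow> inv w \<circ> tref n x (x+1) \<circ> w = tau0 w x"
  using tref_conj[OF per_inv ncong_succ, of w x] unfolding tau0_def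
  by (metis per_def inv_inv_eq)

lemma tau0_eq_iff:
  assumes w: "per w" and pq: "ncong p q"
  shows "tref n p q = tau0 w x \<longleftrightarrow>
    ((w p mod int n = x mod int n \<and> w q = w p + 1) \<or> (w q mod int n = x mod int n \<and> w p = w q + 1))"
proof
  assume "tref n p q = tau0 w x"
  then obtain m where "(inv w x = p + m * int n \<and> inv w (x+1) = q + m * int n) \<or>
      (inv w x = q + m * int n \<and> inv w (x+1) = p + m * int n)"
    using tref_eq[OF pq tau0_ncong[OF w]] unfolding tau0_def by metis
  then show "((w p mod int n = x mod int n \<and> w q = w p + 1) \<or> (w q mod int n = x mod int n \<and> w p = w q + 1))"
  proof
    assume h: "inv w x = p + m * int n \<and> inv w (x+1) = q + m * int n"
    have e1: "w (inv w x) = x" "w (inv w (x+1)) = x + 1" using per_f_inv[OF w] by auto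
    have "x = w p + m * int n" "x + 1 = w q + m * int n"
      using e1 h per_shift[OF w, of p m] per_shift[OF w, of q m] by simp_all
    then show ?thesis by simp
  next
    assume h: "inv w x = q + m * int n \<and> inv w (x+1) = p + m * int n"
    have e1: "w (inv w x) = x" "w (inv w (x+1)) = x + 1" using per_f_inv[OF w] by auto
    have "x = w q + m * int n" "x + 1 = w p + m * int n"
      using e1 h per_shift[OF w, of q m] per_shift[OF w, of p m] by simp_all
    then show ?thesis by simp
  qed
next
  have iw: "per (inv w)" using per_inv[OF w] .
  have key: "tref n a b = tau0 w x" if a: "w a mod int n = x mod int n" and b: "w b = w a + 1" and ab: "ncong a b" for a b
  proof -
    define m where "m = (w a - x) div int n"
    have wa: "w a = x + m * int n" using mod_ex[OF a[symmetric]] unfolding m_def .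
    have "a = inv w x + m * int n" using wa per_inv_f[OF w, of a] per_shift[OF iw, of x m] by simp
    moreover have "w b = (x + 1) + m * int n" using wa b by simp
    then have "b = inv w (x+1) + m * int n"
      using per_inv_f[OF w, of b] per_shift[OF iw, of "x+1" m] by simp
    ultimately have "tref n a b = tref n (inv w x) (inv w (x+1))" using tref_shift by simp
    then show ?thesis unfolding tau0_def .
  qed
  assume "((w p mod int n = x mod int n \<and> w q = w p + 1) \<or> (w q mod int n = x mod int n \<and> w p = w q + 1))"
  then show "tref n p q = tau0 w x"
  proof
    assume "w p mod int n = x mod int n \<and> w q = w p + 1"
    then show ?thesis using key pq by blast
  next
    assume "w q mod int n = x mod int n \<and> w p = w q + 1"
    moreover have "ncong q p" using pq unfolding ncong_def by auto
    ultimately have "tref n q p = tau0 w x" using key by blast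
    then show ?thesis using tref_sym[OF pq] by simp
  qed
qed


lemma s_per: "per (tref n x (x+1))" using tref_per[OF ncong_succ] .

lemma s_swap:
  assumes uv: "u \<noteq> v"
  shows "tref n x (x+1) v < tref n x (x+1) u \<longleftrightarrow>
    ((v < u) \<noteq> ((u mod int n = x mod int n \<and> v = u+1) \<or> (v mod int n = x mod int n \<and> u = v+1)))"
proof -
  have ne: "tref n x (x+1) u \<noteq> tref n x (x+1) v" using per_inj[OF s_per] uv by auto
  show ?thesis
  proof (cases "u < v")
    case True
    then show ?thesis using s_lt[OF True, of x] ne by auto
  next
    case False
    then have "v < u" using uv by simp
    then show ?thesis using s_lt[OF \<open>v < u\<close>, of x] ne by auto
  qed
qed

lemma Nset_left:
  assumes w: "per w"
  shows "Nset (tref n x (x+1) \<circ> w) = (Nset w - {tau0 w x}) \<union> ({tau0 w x} - Nset w)"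
proof -
  have sw: "per (tref n x (x+1) \<circ> w)" using per_comp[OF s_per w] .
  have key: "tref n p q \<in> Nset (tref n x (x+1) \<circ> w) \<longleftrightarrow>
      tref n p q \<in> (Nset w - {tau0 w x}) \<union> ({tau0 w x} - Nset w)" if pq: "ncong p q" for p q
  proof -
    have wpq: "w p \<noteq> w q" using per_inj[OF w] ncong_irrefl[OF pq] by auto
    have A: "tref n x (x+1) (w q) < tref n x (x+1) (w p) \<longleftrightarrow> ((w q < w p) \<noteq> (tref n p q = tau0 w x))"
      unfolding tau0_eq_iff[OF w pq] by (rule s_swap[OF wpq])
    have B: "tref n p q \<in> Nset (tref n x (x+1) \<circ> w) \<longleftrightarrow>
        (p < q \<longleftrightarrow> tref n x (x+1) (w q) < tref n x (x+1) (w p))"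
      using Nset_iff[OF sw pq] by (simp only: comp_apply)
    have C: "tref n p q \<in> Nset w \<longleftrightarrow> (p < q \<longleftrightarrow> w q < w p)" using Nset_iff[OF w pq] .
    have D: "tref n p q \<in> (Nset w - {tau0 w x}) \<union> ({tau0 w x} - Nset w) \<longleftrightarrow>
       ((tref n p q \<in> Nset w) \<noteq> (tref n p q = tau0 w x))" by blast
    show ?thesis unfolding B A D C by blast
  qed
  show ?thesis
  proof (rule set_eqI)
    fix t
    show "t \<in> Nset (tref n x (x+1) \<circ> w) \<longleftrightarrow> t \<in> (Nset w - {tau0 w x}) \<union> ({tau0 w x} - Nset w)"
    proof
      assume "t \<in> Nset (tref n x (x+1) \<circ> w)"
      then obtain p q where "ncong p q" "t = tref n p q" using Nset_refl[OF sw] by blast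
      then show "t \<in> (Nset w - {tau0 w x}) \<union> ({tau0 w x} - Nset w)"
        using key[OF \<open>ncong p q\<close>] \<open>t \<in> Nset (tref n x (x+1) \<circ> w)\<close> by simp
    next
      assume h: "t \<in> (Nset w - {tau0 w x}) \<union> ({tau0 w x} - Nset w)"
      then have "t \<in> Nset w \<or> t = tau0 w x" by blast
      then obtain p q where "ncong p q" "t = tref n p q"
        using Nset_refl[OF w] tau0_ncong[OF w] unfolding tau0_def by blast
      then show "t \<in> Nset (tref n x (x+1) \<circ> w)" using key[OF \<open>ncong p q\<close>] h by simp
    qed
  qed
qed

lemma tau0_in_Nset: "per w \<Longrightarrow> tau0 w x \<in> Nset w \<longleftrightarrow> inv w (x+1) < inv w x"
proof -
  assume w: "per w"
  have "inv w x \<noteq> inv w (x+1)" using ncong_irrefl[OF tau0_ncong[OF w]] .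
  moreover have "tref n (inv w x) (inv w (x+1)) \<in> Nset w \<longleftrightarrow> (inv w x < inv w (x+1) \<longleftrightarrow> x + 1 < x)"
    using Nset_iff[OF w tau0_ncong[OF w]] unfolding per_f_inv[OF w] .
  ultimately show ?thesis unfolding tau0_def by linarith
qed

lemma L_left:
  assumes w: "per w"
  shows "L (tref n x (x+1) \<circ> w) = (if inv w (x+1) < inv w x then L w - 1 else L w + 1)"
proof -
  have f: "finite (Nset w)" using finite_Nset[OF w] .
  show ?thesis
  proof (cases "inv w (x+1) < inv w x")
    case True
    then have "tau0 w x \<in> Nset w" using tau0_in_Nset[OF w] by simp
    then have "Nset (tref n x (x+1) \<circ> w) = Nset w - {tau0 w x}" using Nset_left[OF w] by auto
    then show ?thesis using True f \<open>tau0 w x \<in> Nset w\<close> unfolding L_def by (simp add: card_Diff_singleton)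
  next
    case False
    then have "tau0 w x \<notin> Nset w" using tau0_in_Nset[OF w] by simp
    then have "Nset (tref n x (x+1) \<circ> w) = insert (tau0 w x) (Nset w)" using Nset_left[OF w] by auto
    then show ?thesis using False f \<open>tau0 w x \<notin> Nset w\<close> unfolding L_def by simp
  qed
qed

end

context aff begin

abbreviation W :: "nat list \<Rightarrow> int \<Rightarrow> int" where "W \<equiv> word_perm n"

lemma W_Nil[simp]: "W [] = id" unfolding word_perm_def by simp
lemma W_Cons: "W (x # a) = sref n x \<circ> W a" unfolding word_perm_def by simp
lemma W_append: "W (a @ b) = W a \<circ> W b"
  by (induction a) (simp_all add: W_Cons o_assoc)

lemma sref_per: "per (sref n x)" unfolding sref_tref by (rule s_per)
lemma sref_sref: "sref n x \<circ> sref n x = id" unfolding sref_tref by (rule tref_comp_self[OF ncong_succ])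
lemma sref_sref_app: "sref n x (sref n x j) = j" using sref_sref by (metis comp_apply id_apply)

lemma W_per: "per (W a)"
proof (induction a)
  case Nil show ?case unfolding W_Nil by (rule per_id)
next
  case (Cons x a) show ?case unfolding W_Cons by (rule per_comp[OF sref_per Cons])
qed

lemma L_sref: "per w \<Longrightarrow> L (sref n x \<circ> w) = (if inv w (int x+1) < inv w (int x) then L w - 1 else L w + 1)"
  unfolding sref_tref by (rule L_left)

lemma L_W: "L (W a) \<le> length a \<and> even (length a - L (W a))"
proof (induction a)
  case Nil
  have "Nset id = {}" unfolding Nset_def by auto
  then show ?case unfolding L_def by simp
next
  case (Cons x a)
  have L0: "L (W (x # a)) = (if inv (W a) (int x+1) < inv (W a) (int x) then L (W a) - 1 else L (W a) + 1)"
    unfolding W_Cons by (rule L_sref[OF W_per])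
  show ?case
  proof (cases "inv (W a) (int x+1) < inv (W a) (int x)")
    case True
    have "L (W a) \<ge> 1"
    proof -
      have "tau0 (W a) (int x) \<in> Nset (W a)" using tau0_in_Nset[OF W_per] True by simp
      then have "Nset (W a) \<noteq> {}" by blast
      then show ?thesis unfolding L_def using finite_Nset[OF W_per] by (simp add: Suc_leI card_gt_0_iff)
    qed
    then show ?thesis using L0 True Cons by (auto simp: Suc_diff_le)
  next
    case False
    then show ?thesis using L0 Cons by (auto simp: Suc_diff_le)
  qed
qed


lemma affine_per: "affine_perm n w \<Longrightarrow> per w" unfolding affine_perm_def per_def by auto

lemma mod_inj_window:
  assumes "i \<in> {1..int n}" "j \<in> {1..int n}" "i mod int n = j mod int n" shows "i = j"
proof -
  have "(i - 1) mod int n = (j - 1) mod int n" using mod_diff_cong[OF assms(3), of 1 1] by simp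
  moreover have "(i - 1) mod int n = i - 1" "(j - 1) mod int n = j - 1" using assms(1,2)
    by (simp_all add: mod_pos_pos_trivial)
  ultimately show ?thesis by simp
qed

lemma resid_bij: assumes w: "per w" shows "bij_betw (\<lambda>i. w i mod int n) {1..int n} {0..<int n}"
proof -
  have inj: "inj_on (\<lambda>i. w i mod int n) {1..int n}"
  proof (rule inj_onI)
    fix i j assume "i \<in> {1..int n}" "j \<in> {1..int n}" "w i mod int n = w j mod int n"
    then show "i = j" using per_cong[OF w] mod_inj_window by blast
  qed
  have sub: "(\<lambda>i. w i mod int n) ` {1..int n} \<subseteq> {0..<int n}" using npos by auto
  have "card ((\<lambda>i. w i mod int n) ` {1..int n}) = card {0..<int n}"
    using card_image[OF inj] by simp
  then have "(\<lambda>i. w i mod int n) ` {1..int n} = {0..<int n}"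
    using sub by (simp add: card_subset_eq)
  then show ?thesis using inj unfolding bij_betw_def by simp
qed

lemma sref_delta: "sref n x y = y + (if y mod int n = int x mod int n then 1
   else if y mod int n = (int x + 1) mod int n then -1 else 0)"
  unfolding sref_def by simp

lemma affine_sref: assumes a: "affine_perm n w" shows "affine_perm n (sref n x \<circ> w)"
proof -
  have w: "per w" using affine_per[OF a] .
  have p: "per (sref n x \<circ> w)" using per_comp[OF sref_per w] .
  define \<delta> :: "int \<Rightarrow> int" where "\<delta> r = (if r = int x mod int n then 1
       else if r = (int x + 1) mod int n then -1 else 0)" for r
  have ab: "int x mod int n \<noteq> (int x + 1) mod int n" using ncong_succ unfolding ncong_def by simp
  have "(\<Sum>i\<in>{1..int n}. \<delta> (w i mod int n)) = (\<Sum>r\<in>{0..<int n}. \<delta> r)"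
    using sum.reindex_bij_betw[OF resid_bij[OF w], of \<delta>] by simp
  also have "\<dots> = (\<Sum>r\<in>{0..<int n}. (if r = int x mod int n then 1 else 0) - (if r = (int x + 1) mod int n then 1 else 0))"
    unfolding \<delta>_def using ab by (intro sum.cong) auto
  also have "\<dots> = 0" using npos by (simp add: sum_subtractf)
  finally have d0: "(\<Sum>i\<in>{1..int n}. \<delta> (w i mod int n)) = 0" .
  have "(\<Sum>i\<in>{1..int n}. (sref n x \<circ> w) i) = (\<Sum>i\<in>{1..int n}. w i + \<delta> (w i mod int n))"
    unfolding \<delta>_def by (intro sum.cong) (simp_all add: sref_delta)
  also have "\<dots> = (\<Sum>i\<in>{1..int n}. w i)" using d0 by (simp add: sum.distrib)
  finally show ?thesis using a p unfolding affine_perm_def per_def by simp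
qed

lemma affine_id: "affine_perm n id" unfolding affine_perm_def by simp

lemma affine_W: "affine_perm n (W a)"
proof (induction a)
  case Nil show ?case unfolding W_Nil by (rule affine_id)
next
  case (Cons x a) show ?case unfolding W_Cons by (rule affine_sref[OF Cons])
qed

lemma inc_trans:
  assumes u: "\<And>j. u j < u (j+1)" and ab: "(a::int) < b" shows "u a < (u b :: int)"
proof -
  have "a + 1 \<le> b" using ab by simp
  then show ?thesis
  proof (induction b rule: int_ge_induct)
    case base then show ?case using u by simp
  next
    case (step i) then show ?case using u[of i] by simp
  qed
qed

lemma succ_lin:
  assumes f: "\<And>j. f (j+1) = f j + (1::int)" shows "f j = j + f 0"
proof (induction j rule: int_induct[where k=0])
  case base then show ?case by simp
next
  case (step1 i) then show ?case using f[of i] by simp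
next
  case (step2 i) then show ?case using f[of "i-1"] by simp
qed

lemma no_desc_id:
  assumes a: "affine_perm n w" and nd: "\<And>x. x < n \<Longrightarrow> inv w (int x) < inv w (int x + 1)"
  shows "w = id"
proof -
  have w: "per w" using affine_per[OF a] .
  define u where "u = inv w"
  have u: "per u" unfolding u_def using per_inv[OF w] .
  have inc: "u j < u (j+1)" for j
  proof -
    define x0 where "x0 = j mod int n"
    define m where "m = j div int n"
    have j: "j = x0 + m * int n" unfolding x0_def m_def by simp
    have x0r: "0 \<le> x0" "x0 < int n" unfolding x0_def using npos by simp_all
    then have "nat x0 < n" by simp
    then have "u (int (nat x0)) < u (int (nat x0) + 1)" using nd unfolding u_def by blast
    then have "u x0 < u (x0 + 1)" using x0r by simp
    moreover have "u j = u x0 + m * int n" using per_shift[OF u, of x0 m] j by simp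
    moreover have "j + 1 = (x0 + 1) + m * int n" using j by simp
    then have "u (j+1) = u (x0 + 1) + m * int n" using per_shift[OF u, of "x0+1" m] by (simp only:)
    ultimately show ?thesis by simp
  qed
  have succ: "u (j+1) = u j + 1" for j
  proof (rule ccontr)
    assume "u (j+1) \<noteq> u j + 1"
    then have gt: "u (j+1) > u j + 1" using inc[of j] by simp
    define y where "y = u j + 1"
    have uy: "u (w y) = y" unfolding u_def using per_inv_f[OF w] by simp
    show False
    proof (cases "w y \<le> j")
      case True
      then have "u (w y) \<le> u j"
      proof (cases "w y = j")
        case False then have "w y < j" using True by simp
        then show ?thesis using inc_trans[of u, OF inc] less_imp_le by blast
      qed simp
      then show False using uy unfolding y_def by simp
    next
      case False
      then have "u (w y) \<ge> u (j+1)"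
      proof (cases "w y = j + 1")
        case F2: False then have "j + 1 < w y" using False by simp
        then show ?thesis using inc_trans[of u, OF inc] less_imp_le by blast
      qed simp
      then show False using uy gt unfolding y_def by simp
    qed
  qed
  define c where "c = u 0"
  have uj: "u j = j + c" for j unfolding c_def using succ_lin[of u, OF succ] .
  have wj: "w j = j - c" for j
  proof -
    have "w (u (j - c)) = j - c" unfolding u_def using per_f_inv[OF w] .
    then show ?thesis using uj[of "j - c"] by simp
  qed
  have "(\<Sum>i\<in>{1..int n}. w i) = (\<Sum>i\<in>{1..int n}. i) - int n * c"
    using wj by (simp add: sum_subtractf)
  then have "int n * c = 0" using a unfolding affine_perm_def by simp
  then have "c = 0" using npos by simp
  then show "w = id" using wj by (intro ext) simp
qed

lemma L_id: "L id = 0"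
proof -
  have "Nset id = {}" unfolding Nset_def by auto
  then show ?thesis unfolding L_def by simp
qed

lemma exists_word: "affine_perm n w \<Longrightarrow> \<exists>a. is_word n a \<and> length a = L w \<and> W a = w"
proof (induction "L w" arbitrary: w)
  case 0
  show ?case
  proof (cases "w = id")
    case True
    have "is_word n [] \<and> length [] = L w \<and> W [] = w" unfolding True W_Nil L_id is_word_def by simp
    then show ?thesis by blast
  next
    case False
    then obtain x where x: "x < n" "\<not> inv w (int x) < inv w (int x + 1)" using no_desc_id[OF 0(2)] by blast
    have w: "per w" using affine_per[OF 0(2)] .
    have "inv w (int x) \<noteq> inv w (int x + 1)" using ncong_irrefl[OF tau0_ncong[OF w]] .
    then have "inv w (int x + 1) < inv w (int x)" using x by linarith
    then have "tau0 w (int x) \<in> Nset w" using tau0_in_Nset[OF w, of "int x"] by simp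
    then have "L w > 0" unfolding L_def using finite_Nset[OF w] card_gt_0_iff by blast
    then show ?thesis using 0(1) by simp
  qed
next
  case (Suc k)
  have w: "per w" using affine_per[OF Suc(3)] .
  have "w \<noteq> id" using Suc(2) L_id by auto
  then obtain x where x: "x < n" "\<not> inv w (int x) < inv w (int x + 1)" using no_desc_id[OF Suc(3)] by blast
  moreover have "inv w (int x) \<noteq> inv w (int x + 1)" using ncong_irrefl[OF tau0_ncong[OF w]] .
  ultimately have lt: "inv w (int x + 1) < inv w (int x)" by linarith
  define w' where "w' = sref n x \<circ> w"
  have Lw': "L w' = k" using L_sref[OF w, of x] lt Suc(2) unfolding w'_def by simp
  have aw': "affine_perm n w'" unfolding w'_def using affine_sref[OF Suc(3)] .
  obtain a where a: "is_word n a" "length a = L w'" "W a = w'" using Suc(1)[OF Lw'[symmetric] aw'] by blast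
  have "W (x # a) = w" unfolding W_Cons a(3) w'_def by (rule ext) (simp add: sref_sref_app)
  moreover have "is_word n (x # a)" using a(1) x(1) unfolding is_word_def by simp
  ultimately show ?case using a(2) Lw' Suc(2) by (intro exI[of _ "x # a"]) simp
qed

lemma clen_L: assumes a: "affine_perm n w" shows "clen n w = L w"
  unfolding clen_def
proof (rule Least_equality)
  show "\<exists>a. is_word n a \<and> length a = L w \<and> W a = w" using exists_word[OF a] by blast
next
  fix k assume "\<exists>a. is_word n a \<and> length a = k \<and> W a = w"
  then obtain a where "length a = k" "W a = w" by blast
  then show "L w \<le> k" using L_W[of a] by simp
qed

lemma red_words_iff: "affine_perm n w \<Longrightarrow> a \<in> red_words n w \<longleftrightarrow> is_word n a \<and> W a = w \<and> length a = L w"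
  unfolding red_words_def using clen_L by auto

lemma is_reduced_iff: "is_reduced n a \<longleftrightarrow> is_word n a \<and> L (W a) = length a"
  unfolding is_reduced_def using red_words_iff[OF affine_W] by auto

end

context aff begin

definition D :: "nat list \<Rightarrow> nat \<Rightarrow> int \<Rightarrow> int" where
  "D a i = W (drop (Suc i) a)"
definition tau :: "nat list \<Rightarrow> nat \<Rightarrow> int \<Rightarrow> int" where
  "tau a i = inv (D a i) \<circ> sref n (a!i) \<circ> D a i"
definition px :: "nat list \<Rightarrow> nat \<Rightarrow> int" where
  "px a i = inv (D a i) (int (a!i))"
definition py :: "nat list \<Rightarrow> nat \<Rightarrow> int" where
  "py a i = inv (D a i) (int (a!i) + 1)"

lemma D_per: "per (D a i)" unfolding D_def by (rule W_per)

lemma tau_tau0: "tau a i = tau0 (D a i) (int (a!i))"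
  unfolding tau_def sref_tref using tau0_conj[OF D_per] .

lemma tau_tref: "tau a i = tref n (px a i) (py a i)"
  unfolding tau_tau0 tau0_def px_def py_def ..

lemma pxy_ncong: "ncong (px a i) (py a i)"
  unfolding px_def py_def using tau0_ncong[OF D_per] .

lemma tau_per: "per (tau a i)" unfolding tau_tref using tref_per[OF pxy_ncong] .

lemma tau_invol: "tau a i (tau a i j) = j" unfolding tau_tref using tref_invol[OF pxy_ncong] .

lemma W_del: assumes i: "i < length a" shows "W (del_at i a) = W a \<circ> tau a i"
proof -
  have a: "a = take i a @ (a!i) # drop (Suc i) a" using i by (simp add: id_take_nth_drop)
  have Wa: "W a = W (take i a) \<circ> sref n (a!i) \<circ> D a i"
    unfolding D_def by (subst a) (simp add: W_append W_Cons o_assoc)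
  show ?thesis
  proof
    fix j
    have "(W a \<circ> tau a i) j = W (take i a) (sref n (a!i) (D a i (inv (D a i) (sref n (a!i) (D a i j)))))"
      unfolding Wa tau_def by simp
    also have "\<dots> = W (take i a) (D a i j)" using per_f_inv[OF D_per] sref_sref_app by simp
    also have "\<dots> = W (del_at i a) j" unfolding del_at_def D_def W_append by simp
    finally show "W (del_at i a) j = (W a \<circ> tau a i) j" by simp
  qed
qed

lemma W_from_del: assumes i: "i < length a" shows "W a = W (del_at i a) \<circ> tau a i"
  unfolding W_del[OF i] by (rule ext) (simp add: tau_invol)

lemma tau_Cons0: "tau (x # a) 0 = tau0 (W a) (int x)"
  unfolding tau_tau0 D_def by simp

lemma tau_Cons_Suc: "tau (x # a) (Suc q) = tau a q"
  unfolding tau_def D_def by simp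

definition red :: "nat list \<Rightarrow> bool" where "red a \<longleftrightarrow> L (W a) = length a"

lemma red_Cons: assumes r: "red (x # a)" shows "red a" "tau0 (W a) (int x) \<notin> Nset (W a)"
proof -
  have L0: "L (W (x # a)) = (if inv (W a) (int x+1) < inv (W a) (int x) then L (W a) - 1 else L (W a) + 1)"
    unfolding W_Cons by (rule L_sref[OF W_per])
  have le: "L (W a) \<le> length a" using L_W[of a] by simp
  have nd: "\<not> inv (W a) (int x+1) < inv (W a) (int x)"
  proof
    assume "inv (W a) (int x+1) < inv (W a) (int x)"
    then have "L (W (x # a)) = L (W a) - 1" using L0 by simp
    then show False using r le unfolding red_def by simp
  qed
  then show "red a" using L0 r le unfolding red_def by simp
  show "tau0 (W a) (int x) \<notin> Nset (W a)" using nd tau0_in_Nset[OF W_per] by simp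
qed

lemma red_Nset: "red c \<Longrightarrow> Nset (W c) = tau c ` {..<length c}"
proof (induction c)
  case Nil
  show ?case unfolding W_Nil Nset_def by simp
next
  case (Cons x c)
  have rc: "red c" and nin: "tau0 (W c) (int x) \<notin> Nset (W c)" using red_Cons[OF Cons(2)] by auto
  have "Nset (W (x # c)) = insert (tau0 (W c) (int x)) (Nset (W c))"
    unfolding W_Cons sref_tref using Nset_left[OF W_per, of "int x" c] nin by auto
  also have "\<dots> = insert (tau (x#c) 0) (tau c ` {..<length c})" using Cons(1)[OF rc] tau_Cons0 by simp
  also have "\<dots> = tau (x # c) ` {..<length (x # c)}"
    unfolding length_Cons lessThan_Suc_eq_insert_0 by (auto simp: tau_Cons_Suc image_image)
  finally show ?case .
qed

lemma red_inj: assumes r: "red c" shows "inj_on (tau c) {..<length c}"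
proof (rule eq_card_imp_inj_on)
  show "finite {..<length c}" by simp
  have "card (tau c ` {..<length c}) = L (W c)" unfolding L_def red_Nset[OF r] ..
  then show "card (tau c ` {..<length c}) = card {..<length c}" using r unfolding red_def by simp
qed

lemma red_tl: "red c \<Longrightarrow> red (tl c)"
  by (cases c) (auto dest: red_Cons)

lemma red_drop: "red c \<Longrightarrow> red (drop m c)"
proof (induction m)
  case 0 then show ?case by simp
next
  case (Suc m) then show ?case using red_tl[of "drop m c"] by (simp add: drop_Suc tl_drop)
qed

lemma strong_exchange:
  assumes a: "affine_perm n w" and t: "t \<in> Nset w" shows "L (w \<circ> t) < L w"
proof -
  obtain c where c: "is_word n c" "length c = L w" "W c = w" using exists_word[OF a] by blast
  have r: "red c" unfolding red_def using c by simp
  obtain q where q: "q < length c" "t = tau c q" using t red_Nset[OF r] c(3) by auto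
  have "w \<circ> t = W (del_at q c)" using W_del[OF q(1)] q c(3) by simp
  moreover have "L (W (del_at q c)) \<le> length c - 1" using L_W[of "del_at q c"] q(1)
    unfolding del_at_def by simp
  ultimately show ?thesis using q(1) c(2) by simp
qed

lemma flip:
  assumes w: "per w" and pq: "ncong p q"
  shows "tref n p q \<in> Nset (w \<circ> tref n p q) \<longleftrightarrow> tref n p q \<notin> Nset w"
proof -
  have wpq: "w p \<noteq> w q" using per_inj[OF w] ncong_irrefl[OF pq] by auto
  have pq': "p \<noteq> q" using ncong_irrefl[OF pq] .
  have "tref n p q \<in> Nset (w \<circ> tref n p q) \<longleftrightarrow> (p < q \<longleftrightarrow> w p < w q)"
    using Nset_iff[OF per_comp[OF w tref_per[OF pq]] pq] tref_p[OF pq] tref_q[OF pq] by simp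
  moreover have "tref n p q \<in> Nset w \<longleftrightarrow> (p < q \<longleftrightarrow> w q < w p)" using Nset_iff[OF w pq] .
  ultimately show ?thesis using wpq pq' by linarith
qed

lemma lemmaR:
  assumes a: "affine_perm n w" and a2: "affine_perm n (w \<circ> tref n p q)" and pq: "ncong p q"
    and lt: "L (w \<circ> tref n p q) < L w"
  shows "tref n p q \<in> Nset w"
proof (rule ccontr)
  assume "tref n p q \<notin> Nset w"
  then have "tref n p q \<in> Nset (w \<circ> tref n p q)" using flip[OF affine_per[OF a] pq] by simp
  then have "L ((w \<circ> tref n p q) \<circ> tref n p q) < L (w \<circ> tref n p q)" using strong_exchange[OF a2] by blast
  moreover have "(w \<circ> tref n p q) \<circ> tref n p q = w" by (rule ext) (simp add: tref_invol[OF pq])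
  ultimately show False using lt by simp
qed

end


locale affv = aff + fixes v :: "int \<Rightarrow> int" assumes av: "affine_perm n v"
begin

lemma vper: "per v" using affine_per[OF av] .

lemma len_del: "i < length a \<Longrightarrow> length (del_at i a) = length a - 1"
  unfolding del_at_def by simp

lemma set_del: "set (del_at i a) \<subseteq> set a"
proof -
  have "set (take i a) \<subseteq> set a" by (rule set_take_subset)
  moreover have "set (drop (Suc i) a) \<subseteq> set a" by (rule set_drop_subset)
  ultimately show ?thesis unfolding del_at_def set_append by (rule Un_least)
qed

lemma is_word_del: "is_word n a \<Longrightarrow> is_word n (del_at i a)"
  unfolding is_word_def using subsetD[OF set_del] by metis

lemma marked_iff: "marked n v (a, i) \<longleftrightarrow> is_word n a \<and> i < length a \<and> W (del_at i a) = v \<and> length a = L v + 1"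
proof -
  have "marked n v (a, i) \<longleftrightarrow> is_word n a \<and> i < length a \<and> (is_word n (del_at i a) \<and> W (del_at i a) = v \<and> length (del_at i a) = L v)"
    unfolding marked_def red_words_iff[OF av] by simp
  also have "\<dots> \<longleftrightarrow> is_word n a \<and> i < length a \<and> W (del_at i a) = v \<and> length a = L v + 1"
    using is_word_del[of a i] len_del[of i a] by auto
  finally show ?thesis .
qed

lemma marked_red: "marked n v (a, i) \<Longrightarrow> red (del_at i a)"
proof -
  assume "marked n v (a, i)"
  then have h: "i < length a" "W (del_at i a) = v" "length a = L v + 1" unfolding marked_iff by auto
  have "length (del_at i a) = L v" using len_del[OF h(1)] h(3) by simp
  then show ?thesis unfolding red_def h(2) by simp
qed

lemma T1:
  assumes i: "i < length b" and q: "i \<le> q" "q < length (del_at i b)"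
  shows "tau (del_at i b) q = tau b (Suc q)"
proof -
  have l: "length (take i b) = i" using i by simp
  have "del_at i b ! q = b ! Suc q" unfolding del_at_def using q l i by (simp add: nth_append)
  moreover have "drop (Suc q) (del_at i b) = drop (Suc (Suc q)) b"
    unfolding del_at_def using q l i by simp
  ultimately show ?thesis unfolding tau_def D_def by simp
qed

lemma T2D:
  assumes i: "i < length b" and q: "q < i"
  shows "D b q = D (del_at i b) q \<circ> tau b i"
proof -
  define M where "M = take (i - Suc q) (drop (Suc q) b)"
  have e1: "drop (Suc q) b = M @ (b ! i) # drop (Suc i) b"
  proof -
    have "drop (Suc q) b = take (i - Suc q) (drop (Suc q) b) @ drop (i - Suc q) (drop (Suc q) b)"
      by (rule append_take_drop_id[symmetric])
    moreover have "drop (i - Suc q) (drop (Suc q) b) = drop i b" using q by simp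
    moreover have "drop i b = b ! i # drop (Suc i) b" using i by (simp add: Cons_nth_drop_Suc)
    ultimately show ?thesis unfolding M_def by simp
  qed
  have e2a: "drop (Suc q) (del_at i b) = drop (Suc q) (take i b) @ drop (Suc i) b"
    unfolding del_at_def using q i by simp
  have e2b: "drop (Suc q) (take i b) = M" unfolding M_def by (simp add: drop_take)
  have e2: "drop (Suc q) (del_at i b) = M @ drop (Suc i) b" using e2a e2b by simp
  show ?thesis
  proof
    fix j
    have "D b q = W M \<circ> (sref n (b ! i) \<circ> D b i)" unfolding D_def e1 W_append W_Cons ..
    then have "D b q j = W M (sref n (b ! i) (D b i j))" by simp
    also have "\<dots> = W M (D b i (inv (D b i) (sref n (b ! i) (D b i j))))" by (simp only: per_f_inv[OF D_per])
    also have "\<dots> = (W M \<circ> D b i) (tau b i j)" unfolding tau_def by simp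
    finally have "D b q j = (W M \<circ> D b i) (tau b i j)" .
    moreover have "W M \<circ> D b i = D (del_at i b) q" unfolding D_def e2 W_append ..
    ultimately show "D b q j = (D (del_at i b) q \<circ> tau b i) j" by simp
  qed
qed

lemma tau_inv: "inv (tau a i) = tau a i" unfolding tau_tref using tref_inv[OF pxy_ncong] .

lemma T2:
  assumes i: "i < length b" and q: "q < i"
  shows "tau b q = tau b i \<circ> tau (del_at i b) q \<circ> tau b i"
proof -
  have nth: "b ! q = del_at i b ! q" unfolding del_at_def using q i by (simp add: nth_append)
  have bD: "bij (D (del_at i b) q)" "bij (tau b i)" using D_per tau_per per_def by auto
  have "inv (D b q) = tau b i \<circ> inv (D (del_at i b) q)"
    unfolding T2D[OF i q] o_inv_distrib[OF bD(1,2)] tau_inv ..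
  then show ?thesis unfolding tau_def T2D[OF i q] nth by (simp add: o_assoc)
qed

lemma tau_cancel: "tau b i \<circ> (tau b i \<circ> f \<circ> tau b i) \<circ> tau b i = f"
  by (rule ext) (simp add: tau_invol)

lemma W_cancel: "W b \<circ> f = W b \<circ> g \<Longrightarrow> f = g"
proof
  fix x assume "W b \<circ> f = W b \<circ> g"
  then have "W b (f x) = W b (g x)" by (metis comp_apply)
  then show "f x = g x" using per_inj[OF W_per] by simp
qed

lemma tau_eq_of_del:
  assumes m: "marked n v (b, i)" and j: "j < length b" and d: "W (del_at j b) = v"
  shows "tau b j = tau b i"
proof -
  have i: "i < length b" "W (del_at i b) = v" using m marked_iff by auto
  have "W b \<circ> tau b j = W b \<circ> tau b i" using W_del[OF j] W_del[OF i(1)] d i(2) by simp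
  then show ?thesis by (rule W_cancel)
qed

definition qidx :: "nat \<Rightarrow> nat \<Rightarrow> nat" where "qidx i j = (if i < j then j - 1 else j)"

lemma qidx_prop:
  assumes m: "marked n v (b, i)" and j: "j < length b" "j \<noteq> i" and t: "tau b j = tau b i"
  shows "qidx i j < length (del_at i b) \<and> tau (del_at i b) (qidx i j) = tau b i"
proof -
  have i: "i < length b" using m marked_iff by auto
  show ?thesis
  proof (cases "i < j")
    case True
    have "j - 1 < length (del_at i b)" using j True len_del[OF i] by simp
    moreover have "tau (del_at i b) (j - 1) = tau b j" using T1[OF i, of "j - 1"] True j len_del[OF i] by simp
    ultimately show ?thesis using True t unfolding qidx_def by simp
  next
    case False
    then have ji: "j < i" using j by simp
    have "j < length (del_at i b)" using ji i len_del[OF i] by simp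
    moreover have "tau (del_at i b) j = tau b i"
    proof -
      have "tau b i \<circ> tau b i \<circ> tau b i = tau b i" by (rule ext) (simp add: tau_invol)
      then show ?thesis using T2[OF i ji] t tau_cancel[of b i "tau (del_at i b) j"] by simp
    qed
    ultimately show ?thesis using False unfolding qidx_def by simp
  qed
qed

lemma uniq_j:
  assumes m: "marked n v (b, i)" and j1: "j1 < length b" "j1 \<noteq> i" "tau b j1 = tau b i"
    and j2: "j2 < length b" "j2 \<noteq> i" "tau b j2 = tau b i"
  shows "j1 = j2"
proof -
  have r: "red (del_at i b)" using marked_red[OF m] .
  have q1: "qidx i j1 < length (del_at i b)" "tau (del_at i b) (qidx i j1) = tau b i" using qidx_prop[OF m j1] by auto
  have q2: "qidx i j2 < length (del_at i b)" "tau (del_at i b) (qidx i j2) = tau b i" using qidx_prop[OF m j2] by auto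
  have "qidx i j1 = qidx i j2" using red_inj[OF r] q1 q2 unfolding inj_on_def by auto
  then show ?thesis using j1(2) j2(2) unfolding qidx_def by (auto split: if_splits)
qed

lemma exists_j:
  assumes m: "marked n v (b, i)" and nr: "\<not> is_reduced n b"
  shows "\<exists>j < length b. j \<noteq> i \<and> tau b j = tau b i"
proof -
  have mb: "is_word n b" "i < length b" "W (del_at i b) = v" "length b = L v + 1" using m marked_iff by auto
  define c where "c = del_at i b"
  have r: "red c" unfolding c_def using marked_red[OF m] .
  have lc: "length c = L v" unfolding c_def using len_del[OF mb(2)] mb(4) by simp
  have Wb: "W b = v \<circ> tref n (px b i) (py b i)" using W_from_del[OF mb(2)] mb(3) tau_tref by simp
  have "L (W b) \<noteq> length b" using nr mb(1) is_reduced_iff by simp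
  moreover have "L (W b) \<le> length b" "even (length b - L (W b))" using L_W by auto
  moreover obtain k where k: "length b - L (W b) = 2 * k" using \<open>even (length b - L (W b))\<close> by (rule evenE)
  ultimately have "k \<noteq> 0" by auto
  then have "length b - L (W b) \<ge> 2" using k by simp
  then have "L (W b) < L v" using mb(4) by simp
  then have lt: "L (v \<circ> tref n (px b i) (py b i)) < L v" using Wb by simp
  have "affine_perm n (v \<circ> tref n (px b i) (py b i))" using affine_W[of b] Wb by simp
  then have "tref n (px b i) (py b i) \<in> Nset v"
    using lemmaR[OF av _ pxy_ncong lt] by blast
  then obtain q where q: "q < length c" "tau c q = tau b i" using red_Nset[OF r] mb(3) tau_tref
    unfolding c_def by auto
  show ?thesis
  proof (cases "i \<le> q")
    case True
    have "tau b (Suc q) = tau b i" using T1[OF mb(2) True] q unfolding c_def by simp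
    moreover have "Suc q < length b" using q lc mb(4) by simp
    ultimately show ?thesis using True by (intro exI[of _ "Suc q"]) simp
  next
    case False
    then have qi: "q < i" by simp
    have "tau b q = tau b i \<circ> tau b i \<circ> tau b i" using T2[OF mb(2) qi] q(2) unfolding c_def by simp
    also have "\<dots> = tau b i" by (rule ext) (simp add: tau_invol)
    finally have "tau b q = tau b i" .
    then show ?thesis using qi mb(2) by (intro exI[of _ q]) simp
  qed
qed

end

context affv begin

definition dec :: "nat list \<Rightarrow> nat \<Rightarrow> nat list" where
  "dec a i = a[i := (a!i + n - 1) mod n]"

lemma next_eq: "little_next n v (a, i) = (if is_reduced n (dec a i) then (dec a i, i)
   else (dec a i, THE j. j < length (dec a i) \<and> j \<noteq> i \<and> del_at j (dec a i) \<in> red_words n v))"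
  unfolding little_next_def dec_def Let_def by simp

lemma dec_len: "length (dec a i) = length a" unfolding dec_def by simp
lemma dec_del: "i < length a \<Longrightarrow> del_at i (dec a i) = del_at i a"
  unfolding dec_def del_at_def by simp
lemma dec_drop: "drop (Suc i) (dec a i) = drop (Suc i) a"
  unfolding dec_def by simp
lemma dec_D: "D (dec a i) i = D a i" unfolding D_def dec_drop ..
lemma dec_nth: "i < length a \<Longrightarrow> dec a i ! i = (a!i + n - 1) mod n" unfolding dec_def by simp
lemma dec_word: "is_word n a \<Longrightarrow> is_word n (dec a i)"
  unfolding dec_def is_word_def using npos
  by (metis insert_iff mod_less_divisor of_nat_0_less_iff set_update_subset_insert subsetD)

lemma marked_dec: "marked n v (a, i) \<Longrightarrow> marked n v (dec a i, i)"
  unfolding marked_iff using dec_len dec_del dec_word by auto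

lemma del_red:
  assumes m: "marked n v (b, i)" and j: "j < length b" "tau b j = tau b i"
  shows "del_at j b \<in> red_words n v"
proof -
  have mb: "is_word n b" "i < length b" "W (del_at i b) = v" "length b = L v + 1" using m marked_iff by auto
  have "W (del_at j b) = v" using W_del[OF j(1)] W_del[OF mb(2)] j(2) mb(3) by simp
  moreover have "length (del_at j b) = L v" using len_del[OF j(1)] mb(4) by simp
  ultimately show ?thesis unfolding red_words_iff[OF av] using is_word_del[OF mb(1)] by simp
qed

lemma the_j:
  assumes m: "marked n v (b, i)" and nr: "\<not> is_reduced n b"
  defines "j \<equiv> THE j. j < length b \<and> j \<noteq> i \<and> del_at j b \<in> red_words n v"
  shows "j < length b \<and> j \<noteq> i \<and> del_at j b \<in> red_words n v \<and> tau b j = tau b i"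
proof -
  have ex: "\<exists>!j. j < length b \<and> j \<noteq> i \<and> del_at j b \<in> red_words n v"
  proof -
    obtain j0 where j0: "j0 < length b" "j0 \<noteq> i" "tau b j0 = tau b i" using exists_j[OF m nr] by blast
    have "j0 < length b \<and> j0 \<noteq> i \<and> del_at j0 b \<in> red_words n v" using j0 del_red[OF m] by blast
    moreover have "j' = j0" if "j' < length b \<and> j' \<noteq> i \<and> del_at j' b \<in> red_words n v" for j'
    proof -
      have "W (del_at j' b) = v" using that red_words_iff[OF av] by blast
      then have "tau b j' = tau b i" using tau_eq_of_del[OF m] that by blast
      then show ?thesis using uniq_j[OF m _ _ _ j0] that by blast
    qed
    ultimately show ?thesis by blast
  qed
  have "j < length b \<and> j \<noteq> i \<and> del_at j b \<in> red_words n v" unfolding j_def using theI'[OF ex] .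
  moreover then have "tau b j = tau b i" using tau_eq_of_del[OF m] red_words_iff[OF av] by blast
  ultimately show ?thesis by blast
qed

lemma next_marked: assumes m: "marked n v x" shows "marked n v (little_next n v x)"
proof -
  obtain a i where x: "x = (a, i)" by (cases x)
  have md: "marked n v (dec a i, i)" using marked_dec m x by simp
  show ?thesis
  proof (cases "is_reduced n (dec a i)")
    case True then show ?thesis using md x next_eq by simp
  next
    case False
    define j where "j = (THE j. j < length (dec a i) \<and> j \<noteq> i \<and> del_at j (dec a i) \<in> red_words n v)"
    have j: "j < length (dec a i)" "del_at j (dec a i) \<in> red_words n v" using the_j[OF md False] unfolding j_def by auto
    have "is_word n (dec a i)" using md marked_iff by auto
    then have "marked n v (dec a i, j)" unfolding marked_def using j by simp
    then show ?thesis using False x next_eq j_def by simp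
  qed
qed

lemma py_dec:
  assumes i: "i < length a" and k: "a ! i < n"
  shows "py (dec a i) i mod int n = px a i mod int n"
proof -
  define k where "k = a ! i"
  have "int ((k + n - 1) mod n) = (int k + int n - 1) mod int n" using n2 by (simp add: of_nat_mod of_nat_diff)
  then have "(int ((k + n - 1) mod n) + 1) mod int n = (int k + int n - 1 + 1) mod int n" by (simp add: mod_add_left_eq)
  also have "\<dots> = int k mod int n" by simp
  finally have e: "(int (dec a i ! i) + 1) mod int n = int (a ! i) mod int n" using dec_nth[OF i] unfolding k_def by simp
  show ?thesis unfolding px_def py_def dec_D using per_cong[OF per_inv[OF D_per]] e by simp
qed

lemma O1: "px a i < py a i \<longleftrightarrow> tau a i \<notin> Nset (D a i)"
proof -
  have "tau a i \<in> Nset (D a i) \<longleftrightarrow> (px a i < py a i \<longleftrightarrow> D a i (py a i) < D a i (px a i))"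
    unfolding tau_tref using Nset_iff[OF D_per pxy_ncong] .
  moreover have "D a i (px a i) = int (a!i)" "D a i (py a i) = int (a!i) + 1"
    unfolding px_def py_def using per_f_inv[OF D_per] by auto
  ultimately show ?thesis by simp
qed

lemma O2: assumes i: "i < length a" and r: "red (drop i a)" shows "px a i < py a i"
proof -
  have "drop i a = a ! i # drop (Suc i) a" using i by (simp add: Cons_nth_drop_Suc)
  then have "tau0 (W (drop (Suc i) a)) (int (a!i)) \<notin> Nset (W (drop (Suc i) a))" using red_Cons(2) r by metis
  then have "tau a i \<notin> Nset (D a i)" unfolding tau_tau0 D_def .
  then show ?thesis using O1 by simp
qed

lemma tau_drop: assumes "m \<le> p" "p < length a" shows "tau (drop m a) (p - m) = tau a p"
proof -
  have "drop m a ! (p - m) = a ! p" using assms by simp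
  moreover have "drop (Suc (p - m)) (drop m a) = drop (Suc p) a" using assms by simp
  ultimately show ?thesis unfolding tau_def D_def by simp
qed

lemma step_nonred:
  assumes m: "marked n v (b, i)" and j: "j < length b" "j \<noteq> i" "tau b j = tau b i"
  shows "px b j mod int n = py b i mod int n"
proof -
  have mb: "is_word n b" "i < length b" "W (del_at i b) = v" "length b = L v + 1" using m marked_iff by auto
  define c where "c = del_at i b"
  have rc: "red c" unfolding c_def using marked_red[OF m] .
  have lc: "length c = length b - 1" unfolding c_def using len_del[OF mb(2)] .
  have orient: "(px b i < py b i) \<noteq> (px b j < py b j)"
  proof (cases "i < j")
    case True
    have "drop j b = drop (j - 1) c" unfolding c_def del_at_def using True mb(2) by simp
    then have "red (drop j b)" using red_drop[OF rc] by simp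
    then have oj: "px b j < py b j" using O2[OF j(1)] by simp
    have dc: "drop (Suc i) b = drop i c" unfolding c_def del_at_def using mb(2) by simp
    have rd: "red (drop (Suc i) b)" using red_drop[OF rc] dc by simp
    have "tau b j = tau (drop (Suc i) b) (j - Suc i)" using tau_drop[of "Suc i" j b] True j(1) by simp
    moreover have "j - Suc i < length (drop (Suc i) b)" using True j(1) by simp
    ultimately have "tau b j \<in> Nset (W (drop (Suc i) b))" using red_Nset[OF rd] by simp
    then have "tau b i \<in> Nset (D b i)" using j(3) unfolding D_def by simp
    then have "\<not> px b i < py b i" using O1 by simp
    then show ?thesis using oj by simp
  next
    case False
    then have ji: "j < i" using j(2) by simp
    have cj: "tau c j = tau b i"
    proof -
      have "tau b i \<circ> tau b i \<circ> tau b i = tau b i" by (rule ext) (simp add: tau_invol)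
      then show ?thesis using T2[OF mb(2) ji] j(3) tau_cancel[of b i "tau c j"] unfolding c_def by simp
    qed
    have jc: "j < length c" using ji mb(2) lc by simp
    have oi: "px b i < py b i"
    proof -
      have "tau b i \<notin> Nset (D b i)"
      proof
        assume "tau b i \<in> Nset (D b i)"
        moreover have "D b i = W (drop i c)" unfolding D_def c_def del_at_def using mb(2) by simp
        moreover have "red (drop i c)" using red_drop[OF rc] .
        ultimately obtain r where r: "r < length (drop i c)" "tau b i = tau (drop i c) r"
          using red_Nset by auto
        have "tau (drop i c) r = tau c (i + r)" using tau_drop[of i "i + r" c] r(1) by simp
        then have "tau c j = tau c (i + r)" using r cj by simp
        moreover have "i + r < length c" using r(1) by simp
        ultimately have "j = i + r" using red_inj[OF rc] jc unfolding inj_on_def by blast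
        then show False using ji by simp
      qed
      then show ?thesis using O1 by simp
    qed
    have oj: "\<not> px b j < py b j"
    proof -
      have "red (drop j c)" using red_drop[OF rc] .
      then have "px c j < py c j" using O2 jc by simp
      then have "tau c j \<notin> Nset (D c j)" using O1 by simp
      then have "tau b i \<notin> Nset (D c j)" using cj by simp
      then have "tau b i \<in> Nset (D c j \<circ> tau b i)"
        using flip[OF D_per[of c j] pxy_ncong[of b i]] unfolding tau_tref by simp
      then have "tau b j \<in> Nset (D b j)" using T2D[OF mb(2) ji] j(3) unfolding c_def by simp
      then show ?thesis using O1 by simp
    qed
    show ?thesis using oi oj by simp
  qed
  have "tref n (px b i) (py b i) = tref n (px b j) (py b j)" using j(3) tau_tref by simp
  then obtain mm where mm: "(px b j = px b i + mm * int n \<and> py b j = py b i + mm * int n) \<or>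
      (px b j = py b i + mm * int n \<and> py b j = px b i + mm * int n)"
    using tref_eq[OF pxy_ncong pxy_ncong] by blast
  then show ?thesis
  proof
    assume "px b j = px b i + mm * int n \<and> py b j = py b i + mm * int n"
    then show ?thesis using orient by simp
  qed simp
qed

lemma STEP:
  assumes m: "marked n v (a, i)" and nx: "little_next n v (a, i) = (b, j)"
  shows "(is_reduced n b \<longrightarrow> j = i \<and> py b j mod int n = px a i mod int n) \<and>
         (\<not> is_reduced n b \<longrightarrow> px b j mod int n = px a i mod int n)"
proof -
  have ma: "is_word n a" "i < length a" using m marked_iff by auto
  have ai: "a ! i < n" using ma unfolding is_word_def by simp
  have bd: "b = dec a i" using nx next_eq by (auto split: if_splits)
  have pd: "py b i mod int n = px a i mod int n" using py_dec[OF ma(2) ai] bd by simp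
  show ?thesis
  proof (cases "is_reduced n b")
    case True
    then have "j = i" using nx next_eq bd by (auto split: if_splits)
    then show ?thesis using True pd by simp
  next
    case False
    have md: "marked n v (b, i)" using marked_dec[OF m] bd by simp
    have "j = (THE j. j < length b \<and> j \<noteq> i \<and> del_at j b \<in> red_words n v)"
      using nx next_eq bd False by (auto split: if_splits)
    then have jj: "j < length b" "j \<noteq> i" "tau b j = tau b i" using the_j[OF md False] by auto
    show ?thesis using step_nonred[OF md jj] pd False by simp
  qed
qed

end

context affv begin

lemma per_cancel: "per f \<Longrightarrow> f \<circ> g = f \<circ> h \<Longrightarrow> g = h"
proof
  fix x assume p: "per f" and e: "f \<circ> g = f \<circ> h"
  then have "f (g x) = f (h x)" by (metis comp_apply)
  then show "g x = h x" using per_inj[OF p] by simp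
qed

lemma red_marked_W:
  assumes m: "marked n v (a, i)" and r: "is_reduced n a"
  shows "W a = v \<circ> tref n (px a i) (py a i)" "px a i < py a i"
proof -
  have ma: "i < length a" "W (del_at i a) = v" using m marked_iff by auto
  show "W a = v \<circ> tref n (px a i) (py a i)" using W_from_del[OF ma(1)] ma(2) tau_tref by simp
  have "red a" using r is_reduced_iff red_def by simp
  then show "px a i < py a i" using O2[OF ma(1)] red_drop by blast
qed

lemma red_words_self: "is_reduced n a \<Longrightarrow> a \<in> red_words n (W a)" unfolding is_reduced_def .

lemma covers_W:
  assumes m: "marked n v (a, i)" and r: "is_reduced n a"
  shows "covers n v (W a)"
proof -
  have "L (W a) = length a" using r is_reduced_iff by simp
  moreover have "length a = L v + 1" using m marked_iff by auto
  ultimately have "clen n (W a) = clen n v + 1" using clen_L[OF av] clen_L[OF affine_W] by simp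
  moreover have "px a i mod int n \<noteq> py a i mod int n" using pxy_ncong unfolding ncong_def .
  ultimately show ?thesis unfolding covers_def using red_marked_W(1)[OF m r] by blast
qed

lemma mrw_plus_iff:
  "(a, i) \<in> marked_red_words n v (Psi_plus n r v) \<longleftrightarrow>
     marked n v (a, i) \<and> is_reduced n a \<and> px a i mod int n = r mod int n"
proof
  assume "(a, i) \<in> marked_red_words n v (Psi_plus n r v)"
  then obtain w s where w: "a \<in> red_words n w" "i < length a" "del_at i a \<in> red_words n v"
      "s > r" "s mod int n \<noteq> r mod int n" "w = v \<circ> tref n r s"
    unfolding marked_red_words_def Psi_plus_def by blast
  have Wa: "W a = w" "is_word n a" using w(1) unfolding red_words_def by auto
  have red: "is_reduced n a" using red_words_self w(1) Wa unfolding is_reduced_def by simp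
  have m: "marked n v (a, i)" unfolding marked_def using w Wa by simp
  have "v \<circ> tref n r s = v \<circ> tref n (px a i) (py a i)" using red_marked_W(1)[OF m red] Wa w(6) by simp
  then have e: "tref n r s = tref n (px a i) (py a i)" using per_cancel[OF vper] by blast
  have rs: "ncong r s" using w(5) unfolding ncong_def by simp
  obtain mm where "(px a i = r + mm * int n \<and> py a i = s + mm * int n) \<or> (px a i = s + mm * int n \<and> py a i = r + mm * int n)"
    using tref_eq[OF rs pxy_ncong e] by blast
  moreover have "px a i < py a i" using red_marked_W(2)[OF m red] .
  ultimately have "px a i = r + mm * int n" using w(4) by auto
  then show "marked n v (a, i) \<and> is_reduced n a \<and> px a i mod int n = r mod int n" using m red by simp
next
  assume h: "marked n v (a, i) \<and> is_reduced n a \<and> px a i mod int n = r mod int n"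
  then have m: "marked n v (a, i)" and red: "is_reduced n a" and c: "px a i mod int n = r mod int n" by auto
  define mm where "mm = (px a i - r) div int n"
  have pxm: "px a i = r + mm * int n" using mod_ex[OF c[symmetric]] unfolding mm_def .
  define s where "s = py a i - mm * int n"
  have pym: "py a i = s + mm * int n" unfolding s_def by simp
  have "tref n (px a i) (py a i) = tref n r s" unfolding pxm pym tref_shift ..
  then have Wa: "W a = v \<circ> tref n r s" using red_marked_W(1)[OF m red] by simp
  have sr: "s > r" using red_marked_W(2)[OF m red] pxm pym by simp
  have ns: "s mod int n \<noteq> r mod int n" using pxy_ncong[of a i] unfolding pxm pym ncong_shift ncong_def by simp
  have "W a \<in> Psi_plus n r v" unfolding Psi_plus_def using covers_W[OF m red] Wa sr ns by blast
  moreover have "i < length a" "del_at i a \<in> red_words n v" using m unfolding marked_def by auto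
  ultimately show "(a, i) \<in> marked_red_words n v (Psi_plus n r v)"
    unfolding marked_red_words_def using red_words_self[OF red] by blast
qed

lemma mrw_minus_iff:
  "(a, i) \<in> marked_red_words n v (Psi_minus n r v) \<longleftrightarrow>
     marked n v (a, i) \<and> is_reduced n a \<and> py a i mod int n = r mod int n"
proof
  assume "(a, i) \<in> marked_red_words n v (Psi_minus n r v)"
  then obtain w s where w: "a \<in> red_words n w" "i < length a" "del_at i a \<in> red_words n v"
      "s < r" "s mod int n \<noteq> r mod int n" "w = v \<circ> tref n s r"
    unfolding marked_red_words_def Psi_minus_def by blast
  have Wa: "W a = w" "is_word n a" using w(1) unfolding red_words_def by auto
  have red: "is_reduced n a" using red_words_self w(1) Wa unfolding is_reduced_def by simp
  have m: "marked n v (a, i)" unfolding marked_def using w Wa by simp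
  have "v \<circ> tref n s r = v \<circ> tref n (px a i) (py a i)" using red_marked_W(1)[OF m red] Wa w(6) by simp
  then have e: "tref n s r = tref n (px a i) (py a i)" using per_cancel[OF vper] by blast
  have rs: "ncong s r" using w(5) unfolding ncong_def by simp
  obtain mm where "(px a i = s + mm * int n \<and> py a i = r + mm * int n) \<or> (px a i = r + mm * int n \<and> py a i = s + mm * int n)"
    using tref_eq[OF rs pxy_ncong e] by blast
  moreover have "px a i < py a i" using red_marked_W(2)[OF m red] .
  ultimately have "py a i = r + mm * int n" using w(4) by auto
  then show "marked n v (a, i) \<and> is_reduced n a \<and> py a i mod int n = r mod int n" using m red by simp
next
  assume h: "marked n v (a, i) \<and> is_reduced n a \<and> py a i mod int n = r mod int n"
  then have m: "marked n v (a, i)" and red: "is_reduced n a" and c: "py a i mod int n = r mod int n" by auto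
  define mm where "mm = (py a i - r) div int n"
  have pym: "py a i = r + mm * int n" using mod_ex[OF c[symmetric]] unfolding mm_def .
  define s where "s = px a i - mm * int n"
  have pxm: "px a i = s + mm * int n" unfolding s_def by simp
  have "tref n (px a i) (py a i) = tref n s r" unfolding pxm pym tref_shift ..
  then have Wa: "W a = v \<circ> tref n s r" using red_marked_W(1)[OF m red] by simp
  have sr: "s < r" using red_marked_W(2)[OF m red] pxm pym by simp
  have ns: "s mod int n \<noteq> r mod int n" using pxy_ncong[of a i] unfolding pxm pym ncong_shift ncong_def by simp
  have "W a \<in> Psi_minus n r v" unfolding Psi_minus_def using covers_W[OF m red] Wa sr ns by blast
  moreover have "i < length a" "del_at i a \<in> red_words n v" using m unfolding marked_def by auto
  ultimately show "(a, i) \<in> marked_red_words n v (Psi_minus n r v)"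
    unfolding marked_red_words_def using red_words_self[OF red] by blast
qed

end


lemma iter_in: "f ` A \<subseteq> A \<Longrightarrow> x \<in> A \<Longrightarrow> (f ^^ k) x \<in> A"
  by (induction k) auto

lemma iter_inj: assumes "inj_on f A" "f ` A \<subseteq> A" shows "inj_on (f ^^ k) A"
proof (induction k)
  case 0 then show ?case by simp
next
  case (Suc k)
  have "inj_on (f ^^ k \<circ> f) A" using comp_inj_on[OF assms(1)] Suc inj_on_subset[OF Suc assms(2)] by blast
  then show ?case unfolding funpow_Suc_right .
qed

lemma returns:
  assumes fin: "finite A" and inj: "inj_on f A" and sub: "f ` A \<subseteq> A" and x: "x \<in> A"
  shows "\<exists>k>0. (f ^^ k) x = x"
proof -
  define g where "g k = (f ^^ k) x" for k
  have "range g \<subseteq> A" unfolding g_def using iter_in[OF sub x] by blast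
  then have "finite (range g)" using fin finite_subset by blast
  then have "\<not> inj g" using finite_imageD infinite_UNIV_nat by blast
  then obtain p q where pq: "p \<noteq> q" "g p = g q" unfolding inj_def by blast
  have "\<exists>p q. p < q \<and> g p = g q"
  proof (cases "p < q")
    case True then show ?thesis using pq by blast
  next
    case False then have "q < p" using pq(1) by simp
    then show ?thesis using pq(2) by (intro exI[of _ q] exI[of _ p]) simp
  qed
  then obtain p q where pq: "p < q" "g p = g q" by blast
  have "(f ^^ q) x = (f ^^ (p + (q - p))) x" using pq by simp
  also have "\<dots> = (f ^^ p) ((f ^^ (q - p)) x)" by (simp add: funpow_add)
  finally have "(f ^^ p) ((f ^^ (q - p)) x) = (f ^^ p) x" using pq unfolding g_def by simp
  then have "(f ^^ (q - p)) x = x" using iter_inj[OF inj sub, of p] iter_in[OF sub x] x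
    unfolding inj_on_def by blast
  then show ?thesis using pq(1) by (intro exI[of _ "q - p"]) simp
qed

context affv begin

abbreviation nx where "nx \<equiv> little_next n v"
abbreviation MM where "MM \<equiv> {x. marked n v x}"
abbreviation Red where "Red x \<equiv> is_reduced n (fst x)"
definition pxp where "pxp x = px (fst x) (snd x)"
definition pyp where "pyp x = py (fst x) (snd x)"

lemma finite_MM: "finite MM"
proof -
  have "MM \<subseteq> {a. set a \<subseteq> {..<n} \<and> length a = L v + 1} \<times> {..<L v + 1}"
  proof
    fix x assume "x \<in> MM"
    then obtain a i where x: "x = (a, i)" "marked n v (a, i)" by (cases x) auto
    then show "x \<in> {a. set a \<subseteq> {..<n} \<and> length a = L v + 1} \<times> {..<L v + 1}"
      unfolding marked_iff is_word_def by auto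
  qed
  moreover have "finite ({a. set a \<subseteq> {..<n} \<and> length a = L v + 1} \<times> {..<L v + 1})"
    using finite_lists_length_eq[of "{..<n}"] by simp
  ultimately show ?thesis using finite_subset by blast
qed

lemma nx_sub: "nx ` MM \<subseteq> MM" using next_marked by auto

lemma dec_mod_val: "x < n \<Longrightarrow> (x + n - 1) mod n = (if x = 0 then n - 1 else x - 1)"
proof (cases "x = 0")
  case True then show ?thesis using n2 by simp
next
  case False
  assume "x < n"
  then have "x + n - 1 = (x - 1) + n" using False by simp
  then have "(x + n - 1) mod n = ((x - 1) + n) mod n" by simp
  also have "\<dots> = (x - 1) mod n" by simp
  also have "\<dots> = x - 1" using \<open>x < n\<close> by simp
  finally show ?thesis using False by simp
qed

lemma dec_inj:
  assumes i: "i < length a1" "length a2 = length a1" and w: "a1 ! i < n" "a2 ! i < n"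
    and e: "dec a1 i = dec a2 i"
  shows "a1 = a2"
proof -
  have "(a1 ! i + n - 1) mod n = (a2 ! i + n - 1) mod n"
    using arg_cong[OF e, of "\<lambda>l. l ! i"] i unfolding dec_def by simp
  then have ai: "a1 ! i = a2 ! i" using w dec_mod_val n2 by (auto split: if_splits)
  have "a1 = (dec a1 i)[i := a1 ! i]" unfolding dec_def by simp
  also have "\<dots> = (dec a2 i)[i := a2 ! i]" using e ai by simp
  also have "\<dots> = a2" unfolding dec_def by simp
  finally show ?thesis .
qed

lemma nx_inj: "inj_on nx MM"
proof (rule inj_onI)
  fix x1 x2 assume x1: "x1 \<in> MM" and x2: "x2 \<in> MM" and e: "nx x1 = nx x2"
  obtain a1 i1 where X1: "x1 = (a1, i1)" by (cases x1)
  obtain a2 i2 where X2: "x2 = (a2, i2)" by (cases x2)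
  have m1: "marked n v (a1, i1)" and m2: "marked n v (a2, i2)" using x1 x2 X1 X2 by auto
  have ma1: "is_word n a1" "i1 < length a1" "length a1 = L v + 1" using m1 marked_iff by auto
  have ma2: "is_word n a2" "i2 < length a2" "length a2 = L v + 1" using m2 marked_iff by auto
  obtain b j where bj: "nx (a1, i1) = (b, j)" by (cases "nx (a1, i1)")
  have b1: "b = dec a1 i1" using bj next_eq by (auto split: if_splits)
  have b2: "b = dec a2 i2" using bj e X1 X2 next_eq by (auto split: if_splits)
  have ii: "i1 = i2"
  proof (cases "is_reduced n b")
    case True
    have "j = i1" using bj next_eq b1 True by (auto split: if_splits)
    moreover have "j = i2" using bj e X1 X2 next_eq b2 True by (auto split: if_splits)
    ultimately show ?thesis by simp
  next
    case False
    have md1: "marked n v (b, i1)" using marked_dec[OF m1] b1 by simp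
    have md2: "marked n v (b, i2)" using marked_dec[OF m2] b2 by simp
    have "j = (THE j. j < length b \<and> j \<noteq> i1 \<and> del_at j b \<in> red_words n v)"
      using bj next_eq b1 False by (auto split: if_splits)
    then have j1: "j < length b" "j \<noteq> i1" "del_at j b \<in> red_words n v" "tau b j = tau b i1"
      using the_j[OF md1 False] by auto
    have "j = (THE j. j < length b \<and> j \<noteq> i2 \<and> del_at j b \<in> red_words n v)"
      using bj e X1 X2 next_eq b2 False by (auto split: if_splits)
    then have j2: "j \<noteq> i2" "tau b j = tau b i2" using the_j[OF md2 False] by auto
    have mj: "marked n v (b, j)" unfolding marked_def using j1 md1 unfolding marked_def by auto
    have "i1 < length b" "i2 < length b" using md1 md2 marked_iff by auto
    then show ?thesis using uniq_j[OF mj, of i1 i2] j1 j2 by simp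
  qed
  have "a1 = a2"
  proof (rule dec_inj[of i1])
    show "i1 < length a1" using ma1 by simp
    show "length a2 = length a1" using ma1 ma2 by simp
    show "a1 ! i1 < n" using ma1 unfolding is_word_def by simp
    show "a2 ! i1 < n" using ma2 ii unfolding is_word_def by simp
    show "dec a1 i1 = dec a2 i1" using b1 b2 ii by simp
  qed
  then show "x1 = x2" using X1 X2 ii by simp
qed

lemma nx_returns: "x \<in> MM \<Longrightarrow> \<exists>k>0. (nx ^^ k) x = x"
  using returns[OF finite_MM nx_inj nx_sub] .

lemma phi_props:
  assumes x: "x \<in> MM" and r: "Red x"
  defines "K \<equiv> LEAST k. k > 0 \<and> Red ((nx ^^ k) x)"
  shows "K > 0" "Red ((nx ^^ K) x)" "\<And>m. 0 < m \<Longrightarrow> m < K \<Longrightarrow> \<not> Red ((nx ^^ m) x)"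
    "phi n v x = (nx ^^ K) x"
proof -
  obtain k0 where k0: "k0 > 0" "(nx ^^ k0) x = x" using nx_returns[OF x] by blast
  have ex: "\<exists>k. k > 0 \<and> Red ((nx ^^ k) x)" using k0 r by (intro exI[of _ k0]) simp
  show "K > 0" "Red ((nx ^^ K) x)" unfolding K_def using LeastI_ex[OF ex] by auto
  show "\<And>m. 0 < m \<Longrightarrow> m < K \<Longrightarrow> \<not> Red ((nx ^^ m) x)" unfolding K_def using not_less_Least by blast
  show "phi n v x = (nx ^^ K) x" unfolding phi_def K_def ..
qed

lemma STEP': assumes x: "x \<in> MM"
  shows "(Red (nx x) \<longrightarrow> pyp (nx x) mod int n = pxp x mod int n) \<and>
         (\<not> Red (nx x) \<longrightarrow> pxp (nx x) mod int n = pxp x mod int n)"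
proof -
  obtain a i where X: "x = (a, i)" by (cases x)
  obtain b j where bj: "nx (a, i) = (b, j)" by (cases "nx (a, i)")
  show ?thesis using STEP[OF _ bj] x X bj unfolding pxp_def pyp_def by auto
qed

lemma chain:
  assumes x: "x \<in> MM" and r: "Red x"
  shows "phi n v x \<in> MM" "Red (phi n v x)" "pyp (phi n v x) mod int n = pxp x mod int n"
proof -
  define K where "K = (LEAST k. k > 0 \<and> Red ((nx ^^ k) x))"
  note P = phi_props[OF x r, folded K_def]
  have inM: "(nx ^^ m) x \<in> MM" for m using iter_in[OF nx_sub x] .
  have inv: "m < K \<Longrightarrow> pxp ((nx ^^ m) x) mod int n = pxp x mod int n" for m
  proof (induction m)
    case 0 then show ?case by simp
  next
    case (Suc m)
    have nr: "\<not> Red (nx ((nx ^^ m) x))" using P(3)[of "Suc m"] Suc(2) by simp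
    then show ?case using STEP'[OF inM[of m]] Suc by simp
  qed
  obtain K' where K': "K = Suc K'" using P(1) by (cases K) auto
  have "Red (nx ((nx ^^ K') x))" using P(2) K' by simp
  then have "pyp (nx ((nx ^^ K') x)) mod int n = pxp x mod int n"
    using STEP'[OF inM[of K']] inv[of K'] K' by simp
  then show "pyp (phi n v x) mod int n = pxp x mod int n" using P(4) K' by simp
  show "phi n v x \<in> MM" using P(4) inM by simp
  show "Red (phi n v x)" using P(2,4) by simp
qed

lemma phi_inj_aux:
  assumes x1: "x1 \<in> MM" "Red x1" and x2: "x2 \<in> MM" "Red x2"
    and K1: "K1 > 0" and K2: "\<And>m. 0 < m \<Longrightarrow> m < K2 \<Longrightarrow> \<not> Red ((nx ^^ m) x2)"
    and le: "K1 \<le> K2" and e: "(nx ^^ K1) x1 = (nx ^^ K2) x2"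
  shows "x1 = x2"
proof -
  have "(nx ^^ K2) x2 = (nx ^^ (K1 + (K2 - K1))) x2" using le by simp
  also have "\<dots> = (nx ^^ K1) ((nx ^^ (K2 - K1)) x2)" by (simp add: funpow_add)
  finally have e2: "(nx ^^ K1) x1 = (nx ^^ K1) ((nx ^^ (K2 - K1)) x2)" using e by simp
  have "(nx ^^ (K2 - K1)) x2 \<in> MM" using iter_in[OF nx_sub x2(1)] .
  then have "x1 = (nx ^^ (K2 - K1)) x2"
    using iter_inj[OF nx_inj nx_sub, of K1] x1(1) e2 unfolding inj_on_def by blast
  moreover have "K2 - K1 = 0"
  proof (rule ccontr)
    assume "K2 - K1 \<noteq> 0"
    then have "\<not> Red ((nx ^^ (K2 - K1)) x2)" using K2 K1 le by simp
    then show False using x1(2) \<open>x1 = _\<close> by simp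
  qed
  ultimately show ?thesis by simp
qed

lemma phi_inj:
  assumes x1: "x1 \<in> MM" "Red x1" and x2: "x2 \<in> MM" "Red x2" and e: "phi n v x1 = phi n v x2"
  shows "x1 = x2"
proof -
  define K1 where "K1 = (LEAST k. k > 0 \<and> Red ((nx ^^ k) x1))"
  define K2 where "K2 = (LEAST k. k > 0 \<and> Red ((nx ^^ k) x2))"
  note P1 = phi_props[OF x1, folded K1_def]
  note P2 = phi_props[OF x2, folded K2_def]
  have e': "(nx ^^ K1) x1 = (nx ^^ K2) x2" using e P1(4) P2(4) by simp
  show ?thesis
  proof (cases "K1 \<le> K2")
    case True then show ?thesis using phi_inj_aux[OF x1 x2 P1(1) P2(3) True e'] by simp
  next
    case False
    then have "K2 \<le> K1" by simp
    then show ?thesis using phi_inj_aux[OF x2 x1 P2(1) P1(3) _ e'[symmetric]] by simp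
  qed
qed

lemma phi_surj:
  assumes z: "z \<in> MM" "Red z"
  shows "\<exists>x. x \<in> MM \<and> Red x \<and> phi n v x = z"
proof -
  obtain k0 where k0: "k0 > 0" "(nx ^^ k0) z = z" using nx_returns[OF z(1)] by blast
  define P where "P = {p. p < k0 \<and> Red ((nx ^^ p) z)}"
  have P0: "0 \<in> P" unfolding P_def using k0 z by simp
  have fP: "finite P" unfolding P_def by simp
  define p where "p = Max P"
  have pP: "p \<in> P" unfolding p_def using Max_in[OF fP] P0 by blast
  have pk: "p < k0" "Red ((nx ^^ p) z)" using pP unfolding P_def by auto
  define x where "x = (nx ^^ p) z"
  have xM: "x \<in> MM" unfolding x_def using iter_in[OF nx_sub z(1)] .
  have xr: "Red x" unfolding x_def using pk by simp
  have it: "(nx ^^ k) x = (nx ^^ (k + p)) z" for k unfolding x_def by (simp add: funpow_add)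
  have "(LEAST k. k > 0 \<and> Red ((nx ^^ k) x)) = k0 - p"
  proof (rule Least_equality)
    show "k0 - p > 0 \<and> Red ((nx ^^ (k0 - p)) x)" using it[of "k0 - p"] pk k0 z by simp
  next
    fix k assume k: "k > 0 \<and> Red ((nx ^^ k) x)"
    show "k0 - p \<le> k"
    proof (rule ccontr)
      assume "\<not> k0 - p \<le> k"
      then have "k + p \<in> P" unfolding P_def using k it[of k] by simp
      then have "k + p \<le> p" unfolding p_def using Max_ge[OF fP] by blast
      then show False using k by simp
    qed
  qed
  then have "phi n v x = (nx ^^ (k0 - p)) x" unfolding phi_def by simp
  also have "\<dots> = z" using it[of "k0 - p"] pk k0 by simp
  finally show ?thesis using xM xr by blast
qed

lemma mrw_plus_iff': "x \<in> marked_red_words n v (Psi_plus n r v) \<longleftrightarrow> x \<in> MM \<and> Red x \<and> pxp x mod int n = r mod int n"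
  by (cases x) (simp add: mrw_plus_iff pxp_def)
lemma mrw_minus_iff': "x \<in> marked_red_words n v (Psi_minus n r v) \<longleftrightarrow> x \<in> MM \<and> Red x \<and> pyp x mod int n = r mod int n"
  by (cases x) (simp add: mrw_minus_iff pyp_def)

lemma main:
  "bij_betw (phi n v) (marked_red_words n v (Psi_plus n r v)) (marked_red_words n v (Psi_minus n r v))"
  unfolding bij_betw_def
proof
  show "inj_on (phi n v) (marked_red_words n v (Psi_plus n r v))"
  proof (rule inj_onI)
    fix x y assume "x \<in> marked_red_words n v (Psi_plus n r v)" "y \<in> marked_red_words n v (Psi_plus n r v)"
      "phi n v x = phi n v y"
    then show "x = y" using phi_inj mrw_plus_iff' by blast
  qed
  show "phi n v ` marked_red_words n v (Psi_plus n r v) = marked_red_words n v (Psi_minus n r v)"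
  proof
    show "phi n v ` marked_red_words n v (Psi_plus n r v) \<subseteq> marked_red_words n v (Psi_minus n r v)"
    proof
      fix z assume "z \<in> phi n v ` marked_red_words n v (Psi_plus n r v)"
      then obtain x where x: "x \<in> marked_red_words n v (Psi_plus n r v)" "z = phi n v x" by blast
      have xx: "x \<in> MM" "Red x" "pxp x mod int n = r mod int n" using x(1) mrw_plus_iff' by auto
      show "z \<in> marked_red_words n v (Psi_minus n r v)" unfolding mrw_minus_iff'
        using chain[OF xx(1,2)] xx(3) x(2) by simp
    qed
  next
    show "marked_red_words n v (Psi_minus n r v) \<subseteq> phi n v ` marked_red_words n v (Psi_plus n r v)"
    proof
      fix z assume "z \<in> marked_red_words n v (Psi_minus n r v)"
      then have z: "z \<in> MM" "Red z" "pyp z mod int n = r mod int n" unfolding mrw_minus_iff' by auto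
      obtain x where x: "x \<in> MM" "Red x" "phi n v x = z" using phi_surj[OF z(1,2)] by blast
      have "pxp x mod int n = r mod int n" using chain(3)[OF x(1,2)] x(3) z(3) by simp
      then have "x \<in> marked_red_words n v (Psi_plus n r v)" unfolding mrw_plus_iff' using x by simp
      then show "z \<in> phi n v ` marked_red_words n v (Psi_plus n r v)" using x(3) by blast
    qed
  qed
qed

end

theorem theorem11:
  fixes n :: nat and v :: "int \<Rightarrow> int" and r :: int
  assumes "n \<ge> 2" and "affine_perm n v"
  shows "bij_betw (phi n v) (marked_red_words n v (Psi_plus n r v))
                            (marked_red_words n v (Psi_minus n r v))"
proof -
  interpret affv n v using assms by unfold_locales auto
  show ?thesis by (rule main)
qed


end
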